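(* Suppose every player $i\in\mathcal P$ plays according to ICFR (described below), where every internal-regret minimizer used is a no-internal-regret algorithm and every external-regret minimizer used is a no-external-regret algorithm. Let $\bar\mu^T$ be the empirical frequency of the resulting joint plans $\pi^1,\dots,\pi^T$. Then, almost surely, $\bar\mu^T$ converges to the set of EFCEs: $\limsup_{T\to\infty}\delta(\bar\mu^T)\le 0$, so for every $\epsilon>0$, $\bar\mu^T$ is eventually an $\epsilon$-EFCE. ICFR for player $i$ is defined as follows. - For each $I\in\mathcal I_i$, maintain an internal-regret minimizer $\mathcal R^{\rm int}_I$ over $A(I)$. - For each $I\in\mathcal I_i$ and each $\sigma\in\Sigma^c_i(I)$, maintain an external-regret minimizer $\mathcal R^{\rm ext}_{\sigma,I}$ over $A(I)$. At round $t$, player $i$ builds $\pi_i^t$ by processing infosets in an order consistent with $\preceq$. - If the actions already chosen at the strict predecessors of $I$ place $\pi^t_i$ in $\Pi_i(I)$, then $\pi_i^t(I)$ is the action output by $\mathcal R^{\rm int}_I$. - Otherwise, let $\sigma_I^t=(K,\pi_i^t(K))$, where $K$ is the unique strict predecessor of $I$ with $\pi_i^t\in\Pi_i(K)$ and $\pi^t_i(K)$ different from the action leading from $K$ toward $I$. Then $\pi_i^t(I)$ is the action output by $\mathcal R^{\rm ext}_{\sigma_I^t,I}$. After all players' plans $\pi^t$ are fixed, player $i$ computes $\hat u_I^t$. Then: - each $\mathcal R^{\rm int}_I$ observes the utility vector $a\mapsto\mathbb 1[\pi_i^t\in\Pi_i(I)]\,\hat u_I^t(a)$; - each $\mathcal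 R^{\rm ext}_{\sigma,I}$ observes $a\mapsto\mathbb 1[\pi_i^t\in\Pi_i(\sigma)]\,\hat u_I^t(a)$.
   Context: Setting: a finite extensive-form game with players $\mathcal P$ and a chance player with fixed probabilities. $Z$ is the set of terminal nodes, $u_i:Z\to\mathbb R$ the payoffs, and $p_c(z)$ the product of chance probabilities on the root-to-$z$ path. $\mathcal I_i$ is player $i$'s set of infosets and $A(I)$ is the action set at $I$. The game has perfect recall. $I\preceq J$ means a path goes from a node of $I$ to a node of $J$ (reflexive); a strict predecessor of $I$ is $J\preceq I$ with $J\ne I$. $\mathcal C(I,a)$ is the set of player-$i$ infosets reachable from $I$ via a path starting with $a$ and not passing through another player-$i$ infoset. Plans: $\Pi_i=\prod_{I\in\mathcal I_i}A(I)$, $\Pi=\prod_i\Pi_i$. The sequences of player $i$ are $\Sigma_i=\{(I,a)\}\cup\{\varnothing_i\}$. $\Pi_i(I)$ is the set of plans choosing $b$ at every player-$i$ pair $(K,b)$ on the root path to $I$ (this depends only on the plan's values at strict predecessors of $I$), and $\Pi_i((I,a))=\{\pi_i\in\Pi_i(I):\pi_i(I)=a\}$. $\Pi_i(z)$ and $\Pi_{-i}(z)$ are the plans (profiles) choosing the path actions to terminal node $z$, and $\Pi(z)=\prod_i\Pi_i(z)$. $\Sigma^c_i(I)$ is the set of pairs $(K,b)$ where $K$ is a strict predecessor of $I$ and $b\in A(K)$ is not the action on the path from $K$ to $I$. $Z(I)$ and $Z(I,a)$ are the terminal nodes below $I$, respectively below $I$ via $a$. Immediate utilities: $u_i^t[I,a]=\sum_{z\in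 Z(I,a)\setminus\bigcup_{K\in\mathcal C(I,a)}Z(K)}\mathbb 1[\pi^t_{-i}\in\Pi_{-i}(z)]p_c(z)u_i(z)$. Values: $V_I^t(\pi_i)=u_i^t[I,\pi_i(I)]+\sum_{K\in\mathcal C(I,\pi_i(I))}V_K^t(\pi_i)$. Local utility: $\hat u_I^t(a)=u_i^t[I,a]+\sum_{K\in\mathcal C(I,a)}V_K^t(\pi_i^t)$. A regret minimizer over a finite set $A$ outputs an action $a^t\in A$ (possibly randomized, based on the past) and then observes a bounded utility vector $u^t:A\to\mathbb R$ (possibly chosen adaptively). - It is no-internal-regret if almost surely $\max_{x,\hat x\in A}\sum_{t\le T}\mathbb 1[a^t=x](u^t(\hat x)-u^t(x))=o(T)$. - It is no-external-regret if almost surely $\max_{\hat x}\sum_{t\le T}(u^t(\hat x)-u^t(a^t))=o(T)$. Empirical frequency: $\bar\mu^T(\pi)=|\{t\le T:\pi^t=\pi\}|/T$. For $\mu\in\Delta_\Pi$, $\sigma=(I,a)$, $\hat\mu_i\in\Delta_{\Pi_i(I)}$: \[ p^\sigma_{\mu,\hat\mu_i}(z)=\Big(\sum_{\pi_i\in\Pi_i(\sigma),\pi_{-i}\in\Pi_{-i}(z)}\mu(\pi_i,\pi_{-i})\Big)\Big(\sum_{\hat\pi_i\in\Pi_i(z)}\hat\mu_i(\hat\pi_i)\Big)p_c(z), \] and $q_\mu(z)=\big(\sum_{\pi\in\Pi(z)}\mu(\pi)\big)p_c(z)$. Maximum deviation: \[ \delta(\mu)=\max_i\max_{\sigma=(I,a)}\Big\{\max_{\hat\mu_i\in\Delta_{\Pi_i(I)}}\sum_{z\in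 Z(I)}p^\sigma_{\mu,\hat\mu_i}(z)u_i(z)-\sum_{z\in Z(I,a)}q_\mu(z)u_i(z)\Big\}. \] An EFCE is a $\mu$ with $\delta(\mu)\le0$; an $\epsilon$-EFCE is a $\mu$ with $\delta(\mu)\le\epsilon$. *)

theory Defs
  imports "HOL-Probability.Probability" "HOL-Library.Sublist" "HOL-Library.Landau_Symbols"
begin

text \<open>Rounds are t = 1,2,...; a t is the action output at round t, uv t the utility vector
  observed at round t.\<close>

definition int_regret :: "'a set \<Rightarrow> (nat \<Rightarrow> 'a) \<Rightarrow> (nat \<Rightarrow> 'a \<Rightarrow> real) \<Rightarrow> nat \<Rightarrow> real" where
  "int_regret A a uv T =
     Max {(\<Sum>t\<in>{1..T}. (if a t = x then uv t xh - uv t x else 0)) | x xh. x \<in> A \<and> xh \<in> A}"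

definition ext_regret :: "'a set \<Rightarrow> (nat \<Rightarrow> 'a) \<Rightarrow> (nat \<Rightarrow> 'a \<Rightarrow> real) \<Rightarrow> nat \<Rightarrow> real" where
  "ext_regret A a uv T = Max {(\<Sum>t\<in>{1..T}. uv t xh - uv t (a t)) | xh. xh \<in> A}"

definition Delta :: "'x set \<Rightarrow> ('x \<Rightarrow> real) set" where
  "Delta S = {\<mu>. (\<forall>x. 0 \<le> \<mu> x) \<and> (\<forall>x. x \<notin> S \<longrightarrow> \<mu> x = 0) \<and> sum \<mu> S = 1}"

text \<open>Nodes are histories (lists of actions) in a finite prefix-closed set H.
  owner h = None: chance node; owner h = Some i: node of player i.
  info h: the information set of a player node h. pc h a: chance probability of a at h.
  u i z: payoff of player i at terminal z.\<close>

locale efg =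
  fixes Pl :: "'p set"
    and H :: "'a list set"
    and owner :: "'a list \<Rightarrow> 'p option"
    and info :: "'a list \<Rightarrow> 'i"
    and pc :: "'a list \<Rightarrow> 'a \<Rightarrow> real"
    and u :: "'p \<Rightarrow> 'a list \<Rightarrow> real"
begin

definition acts :: "'a list \<Rightarrow> 'a set" where
  "acts h = {a. h @ [a] \<in> H}"

definition Z :: "'a list set" where
  "Z = {z \<in> H. acts z = {}}"

definition D :: "'a list set" where
  "D = H - Z"

definition seq :: "'p \<Rightarrow> 'a list \<Rightarrow> ('i \<times> 'a) list" where
  "seq i h = [(info (take k h), h ! k). k \<leftarrow> [0..<length h], owner (take k h) = Some i]"

definition nodes :: "'i \<Rightarrow> 'a list set" where
  "nodes I = {h \<in> D. owner h \<noteq> None \<and> info h = I}"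

definition Inf :: "'p \<Rightarrow> 'i set" where
  "Inf i = info ` {h \<in> D. owner h = Some i}"

definition Act :: "'i \<Rightarrow> 'a set" where
  "Act I = (\<Union>h\<in>nodes I. acts h)"

definition preceq :: "'i \<Rightarrow> 'i \<Rightarrow> bool" where
  "preceq I J \<longleftrightarrow> (\<exists>h\<in>nodes I. \<exists>h'\<in>nodes J. prefix h h')"

definition Plans :: "'p \<Rightarrow> ('i \<Rightarrow> 'a) set" where
  "Plans i = (\<Pi>\<^sub>E I\<in>Inf i. Act I)"

definition Joint :: "('p \<Rightarrow> 'i \<Rightarrow> 'a) set" where
  "Joint = (\<Pi>\<^sub>E i\<in>Pl. Plans i)"

definition reaches :: "'p \<Rightarrow> ('i \<Rightarrow> 'a) \<Rightarrow> 'a list \<Rightarrow> bool" where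
  "reaches i p h \<longleftrightarrow> (\<forall>k<length h. owner (take k h) = Some i \<longrightarrow> p (info (take k h)) = h ! k)"

definition PiI :: "'p \<Rightarrow> 'i \<Rightarrow> ('i \<Rightarrow> 'a) set" where
  "PiI i I = {p \<in> Plans i. \<exists>h\<in>nodes I. reaches i p h}"

definition PiS :: "'p \<Rightarrow> 'i \<times> 'a \<Rightarrow> ('i \<Rightarrow> 'a) set" where
  "PiS i \<sigma> = {p \<in> PiI i (fst \<sigma>). p (fst \<sigma>) = snd \<sigma>}"

definition PiZ :: "'p \<Rightarrow> 'a list \<Rightarrow> ('i \<Rightarrow> 'a) set" where
  "PiZ i z = {p \<in> Plans i. reaches i p z}"

definition others_reach :: "'p \<Rightarrow> ('p \<Rightarrow> 'i \<Rightarrow> 'a) \<Rightarrow> 'a list \<Rightarrow> bool" where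
  "others_reach i \<pi> z \<longleftrightarrow> (\<forall>j\<in>Pl. j \<noteq> i \<longrightarrow> reaches j (\<pi> j) z)"

definition pcz :: "'a list \<Rightarrow> real" where
  "pcz z = (\<Prod>k\<in>{k. k < length z \<and> owner (take k z) = None}. pc (take k z) (z ! k))"

definition C :: "'p \<Rightarrow> 'i \<Rightarrow> 'a \<Rightarrow> 'i set" where
  "C i I a = {J \<in> Inf i. \<exists>h\<in>nodes I. \<exists>h'\<in>nodes J. prefix (h @ [a]) h' \<and>
               (\<forall>k. length h < k \<and> k < length h' \<longrightarrow> owner (take k h') \<noteq> Some i)}"

definition Sigc :: "'p \<Rightarrow> 'i \<Rightarrow> ('i \<times> 'a) set" where
  "Sigc i I = {(K, b). K \<in> Inf i \<and> preceq K I \<and> K \<noteq> I \<and> b \<in> Act K \<and>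
                 (\<forall>h\<in>nodes I. \<forall>k<length h. take k h \<in> nodes K \<longrightarrow> h ! k \<noteq> b)}"

definition ZI :: "'i \<Rightarrow> 'a list set" where
  "ZI I = {z \<in> Z. \<exists>h\<in>nodes I. prefix h z}"

definition ZIa :: "'i \<Rightarrow> 'a \<Rightarrow> 'a list set" where
  "ZIa I a = {z \<in> Z. \<exists>h\<in>nodes I. prefix (h @ [a]) z}"

definition imm_u :: "'p \<Rightarrow> ('p \<Rightarrow> 'i \<Rightarrow> 'a) \<Rightarrow> 'i \<Rightarrow> 'a \<Rightarrow> real" where
  "imm_u i \<pi> I a = (\<Sum>z\<in>ZIa I a - (\<Union>K\<in>C i I a. ZI K).
      (if others_reach i \<pi> z then 1 else 0) * pcz z * u i z)"

fun Vn :: "nat \<Rightarrow> 'p \<Rightarrow> ('p \<Rightarrow> 'i \<Rightarrow> 'a) \<Rightarrow> 'i \<Rightarrow> ('i \<Rightarrow> 'a) \<Rightarrow> real" where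
  "Vn 0 i \<pi> I p = 0"
| "Vn (Suc n) i \<pi> I p = imm_u i \<pi> I (p I) + (\<Sum>K\<in>C i I (p I). Vn n i \<pi> K p)"

text \<open>Since infosets in \<C>(I,a) lie strictly deeper in the finite tree, card H unrollings
  reach the bottom of the recursion, so this is exactly the recursively defined V_I.\<close>
definition V :: "'p \<Rightarrow> ('p \<Rightarrow> 'i \<Rightarrow> 'a) \<Rightarrow> 'i \<Rightarrow> ('i \<Rightarrow> 'a) \<Rightarrow> real" where
  "V i \<pi> I p = Vn (card H) i \<pi> I p"

definition local_u :: "'p \<Rightarrow> ('p \<Rightarrow> 'i \<Rightarrow> 'a) \<Rightarrow> 'i \<Rightarrow> 'a \<Rightarrow> real" where
  "local_u i \<pi> I a = imm_u i \<pi> I a + (\<Sum>K\<in>C i I a. V i \<pi> K (\<pi> i))"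

definition sigma_of :: "'p \<Rightarrow> 'i \<Rightarrow> ('i \<Rightarrow> 'a) \<Rightarrow> 'i \<times> 'a" where
  "sigma_of i I p = (THE \<sigma>. \<sigma> \<in> Sigc i I \<and> p \<in> PiS i \<sigma>)"

definition psig :: "'p \<Rightarrow> 'i \<times> 'a \<Rightarrow> (('p \<Rightarrow> 'i \<Rightarrow> 'a) \<Rightarrow> real) \<Rightarrow> (('i \<Rightarrow> 'a) \<Rightarrow> real) \<Rightarrow> 'a list \<Rightarrow> real" where
  "psig i \<sigma> \<mu> \<mu>h z =
     (\<Sum>\<pi>\<in>{\<pi>\<in>Joint. \<pi> i \<in> PiS i \<sigma> \<and> others_reach i \<pi> z}. \<mu> \<pi>) *
     (\<Sum>p\<in>PiZ i z. \<mu>h p) * pcz z"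

definition q :: "(('p \<Rightarrow> 'i \<Rightarrow> 'a) \<Rightarrow> real) \<Rightarrow> 'a list \<Rightarrow> real" where
  "q \<mu> z = (\<Sum>\<pi>\<in>{\<pi>\<in>Joint. \<forall>j\<in>Pl. reaches j (\<pi> j) z}. \<mu> \<pi>) * pcz z"

text \<open>Maximum deviation \<delta>(\<mu>) (extended-real valued; the maxima are suprema, and the
  supremum over the empty set is -\<infinity>).\<close>
definition delta :: "(('p \<Rightarrow> 'i \<Rightarrow> 'a) \<Rightarrow> real) \<Rightarrow> ereal" where
  "delta \<mu> = (SUP i\<in>Pl. SUP \<sigma>\<in>{(I, a). I \<in> Inf i \<and> a \<in> Act I}.
      (SUP \<mu>h\<in>Delta (PiI i (fst \<sigma>)). ereal (\<Sum>z\<in>ZI (fst \<sigma>). psig i \<sigma> \<mu> \<mu>h z * u i z))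
      - ereal (\<Sum>z\<in>ZIa (fst \<sigma>) (snd \<sigma>). q \<mu> z * u i z))"

definition EFCE :: "(('p \<Rightarrow> 'i \<Rightarrow> 'a) \<Rightarrow> real) \<Rightarrow> bool" where
  "EFCE \<mu> \<longleftrightarrow> \<mu> \<in> Delta Joint \<and> delta \<mu> \<le> 0"

definition eps_EFCE :: "real \<Rightarrow> (('p \<Rightarrow> 'i \<Rightarrow> 'a) \<Rightarrow> real) \<Rightarrow> bool" where
  "eps_EFCE \<epsilon> \<mu> \<longleftrightarrow> \<mu> \<in> Delta Joint \<and> delta \<mu> \<le> ereal \<epsilon>"

end

locale wf_efg = efg Pl H owner info pc u
  for Pl :: "'p set" and H :: "'a list set" and owner :: "'a list \<Rightarrow> 'p option"
    and info :: "'a list \<Rightarrow> 'i" and pc :: "'a list \<Rightarrow> 'a \<Rightarrow> real" and u :: "'p \<Rightarrow> 'a list \<Rightarrow> real" +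
  assumes finite_Pl: "finite Pl"
    and finite_H: "finite H"
    and root: "[] \<in> H"
    and prefix_closed: "\<And>h a. h @ [a] \<in> H \<Longrightarrow> h \<in> H"
    and owner_ok: "\<And>h. h \<in> D \<Longrightarrow> owner h = None \<or> (\<exists>i\<in>Pl. owner h = Some i)"
    and chance_nonneg: "\<And>h a. h \<in> D \<Longrightarrow> owner h = None \<Longrightarrow> a \<in> acts h \<Longrightarrow> 0 \<le> pc h a"
    and chance_sum: "\<And>h. h \<in> D \<Longrightarrow> owner h = None \<Longrightarrow> (\<Sum>a\<in>acts h. pc h a) = 1"
    and infoset_consistent: "\<And>h h' i j. h \<in> D \<Longrightarrow> h' \<in> D \<Longrightarrow> owner h = Some i \<Longrightarrow>
           owner h' = Some j \<Longrightarrow> info h = info h' \<Longrightarrow> i = j \<and> acts h = acts h'"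
    and perfect_recall: "\<And>h h' i. h \<in> D \<Longrightarrow> h' \<in> D \<Longrightarrow> owner h = Some i \<Longrightarrow>
           owner h' = Some i \<Longrightarrow> info h = info h' \<Longrightarrow> seq i h = seq i h'"

definition emp_freq :: "(nat \<Rightarrow> 'x) \<Rightarrow> nat \<Rightarrow> 'x \<Rightarrow> real" where
  "emp_freq \<pi>s T = (\<lambda>p. real (card {t\<in>{1..T}. \<pi>s t = p}) / real T)"

end

theory Submission
  imports Defs
begin


context wf_efg begin

lemma prefix_in_H: "h \<in> H \<Longrightarrow> prefix g h \<Longrightarrow> g \<in> H"
proof -
  assume h: "h \<in> H" and p: "prefix g h"
  then obtain r where r: "h = g @ r" by (auto simp: prefix_def)
  have "\<And>g. g @ r \<in> H \<Longrightarrow> g \<in> H"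
  proof (induction r rule: rev_induct)
    case Nil then show ?case by simp
  next
    case (snoc x xs) then show ?case using prefix_closed[of "g @ xs" x for g] by auto
  qed
  then show ?thesis using h r by auto
qed

lemma take_in_H: "h \<in> H \<Longrightarrow> take k h \<in> H"
  using prefix_in_H take_is_prefix by blast

lemma take_in_D: "h \<in> H \<Longrightarrow> k < length h \<Longrightarrow> take k h \<in> D"
proof -
  assume h: "h \<in> H" and k: "k < length h"
  have "take (Suc k) h = take k h @ [h ! k]" using k by (simp add: take_Suc_conv_app_nth)
  then have "take k h @ [h ! k] \<in> H" using take_in_H[OF h, of "Suc k"] by simp
  then have "h ! k \<in> acts (take k h)" by (simp add: acts_def)
  then show ?thesis using take_in_H[OF h] by (auto simp: D_def Z_def)
qed

lemma length_lt_card: "h \<in> H \<Longrightarrow> length h < card H"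
proof -
  assume h: "h \<in> H"
  have sub: "(\<lambda>k. take k h) ` {0..length h} \<subseteq> H" using take_in_H[OF h] by auto
  have inj: "inj_on (\<lambda>k. take k h) {0..length h}"
  proof (rule inj_onI)
    fix x y assume "x \<in> {0..length h}" "y \<in> {0..length h}" "take x h = take y h"
    then show "x = y" by (metis atLeastAtMost_iff length_take min.absorb2)
  qed
  have "card ((\<lambda>k. take k h) ` {0..length h}) \<le> card H"
    using card_mono[OF finite_H sub] .
  moreover have "card ((\<lambda>k. take k h) ` {0..length h}) = card {0..length h}"
    using card_image[OF inj] .
  ultimately have "card {0..length h} \<le> card H" by simp
  then show ?thesis by simp
qed

lemma finite_acts: "finite (acts h)"
proof -
  have "acts h = (\<lambda>a. h @ [a]) -` H" by (auto simp: acts_def)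
  moreover have "inj (\<lambda>a. h @ [a])" by (simp add: inj_def)
  ultimately show ?thesis using finite_vimageI[OF finite_H] by simp
qed

lemma finite_D: "finite D" using finite_H by (simp add: D_def)
lemma finite_Z: "finite Z" using finite_H by (simp add: Z_def)
lemma finite_nodes: "finite (nodes I)" using finite_D by (simp add: nodes_def)
lemma finite_Inf: "finite (Inf i)" using finite_D by (simp add: Inf_def)
lemma finite_Act: "finite (Act I)" using finite_nodes finite_acts by (simp add: Act_def)
lemma finite_Plans: "finite (Plans i)" by (simp add: Plans_def finite_PiE finite_Inf finite_Act)
lemma finite_Joint: "finite Joint" by (simp add: Joint_def finite_PiE finite_Pl finite_Plans)
lemma finite_C: "finite (C i I a)" using finite_Inf by (simp add: C_def)
lemma finite_ZI: "finite (ZI I)" using finite_Z by (simp add: ZI_def)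
lemma finite_ZIa: "finite (ZIa I a)" using finite_Z by (simp add: ZIa_def)
lemma finite_Sigc: "finite (Sigc i I)"
proof -
  have "Sigc i I \<subseteq> Inf i \<times> (\<Union>K\<in>Inf i. Act K)" by (auto simp: Sigc_def)
  moreover have "finite (Inf i \<times> (\<Union>K\<in>Inf i. Act K))" using finite_Inf finite_Act by blast
  ultimately show ?thesis by (rule finite_subset)
qed

lemma D_H: "h \<in> D \<Longrightarrow> h \<in> H" by (simp add: D_def)

lemma nodes_owner: "I \<in> Inf i \<Longrightarrow> h \<in> nodes I \<Longrightarrow> owner h = Some i \<and> h \<in> D \<and> info h = I"
proof -
  assume I: "I \<in> Inf i" and h: "h \<in> nodes I"
  from I obtain h0 where h0: "h0 \<in> D" "owner h0 = Some i" "info h0 = I" by (auto simp: Inf_def)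
  from h obtain j where "owner h = Some j" "h \<in> D" "info h = I" by (auto simp: nodes_def)
  with infoset_consistent[of h0 h i j] h0 show ?thesis by auto
qed

lemma Inf_node: "I \<in> Inf i \<Longrightarrow> \<exists>h. h \<in> nodes I"
  by (auto simp: Inf_def nodes_def)

lemma Act_eq: "I \<in> Inf i \<Longrightarrow> h \<in> nodes I \<Longrightarrow> Act I = acts h"
proof -
  assume I: "I \<in> Inf i" and h: "h \<in> nodes I"
  have e: "acts h' = acts h" if h': "h' \<in> nodes I" for h'
    using nodes_owner[OF I h] nodes_owner[OF I h'] infoset_consistent[of h' h i i] by simp
  have "Act I = (\<Union>h'\<in>nodes I. acts h)" unfolding Act_def using e by (rule SUP_cong[OF refl])
  then show ?thesis using h by auto
qed

lemma PR: "I \<in> Inf i \<Longrightarrow> h \<in> nodes I \<Longrightarrow> h' \<in> nodes I \<Longrightarrow> seq i h = seq i h'"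
proof -
  assume I: "I \<in> Inf i" and h: "h \<in> nodes I" and h': "h' \<in> nodes I"
  show ?thesis using nodes_owner[OF I h] nodes_owner[OF I h'] perfect_recall[of h h' i] by simp
qed

lemma nodes_in: "h \<in> D \<Longrightarrow> owner h = Some i \<Longrightarrow> h \<in> nodes (info h) \<and> info h \<in> Inf i"
  by (auto simp: nodes_def Inf_def)

end

context wf_efg begin

lemma seq_take: "n \<le> length h \<Longrightarrow>
  seq i (take n h) = [(info (take k h), h ! k). k \<leftarrow> [0..<n], owner (take k h) = Some i]"
  unfolding seq_def
  by (auto intro!: arg_cong[where f=concat] map_cong simp: min_def)

lemma seq_snoc: "seq i (h @ [x]) = seq i h @ (if owner h = Some i then [(info h, x)] else [])"
proof -
  have "[(info (take k (h@[x])), (h@[x])!k). k \<leftarrow> [0..<length h], owner (take k (h@[x])) = Some i] = seq i h"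
    unfolding seq_def by (auto intro!: arg_cong[where f=concat] map_cong simp: nth_append)
  then show ?thesis by (simp add: seq_def)
qed

lemma set_seq: "(X, y) \<in> set (seq i h) \<longleftrightarrow>
   (\<exists>k<length h. owner (take k h) = Some i \<and> info (take k h) = X \<and> h ! k = y)"
  by (auto simp: seq_def)

lemma reaches_iff: "reaches i p h \<longleftrightarrow> (\<forall>(X,y)\<in>set (seq i h). p X = y)"
proof
  assume "reaches i p h" then show "\<forall>(X,y)\<in>set (seq i h). p X = y" by (auto simp: reaches_def set_seq)
next
  assume a: "\<forall>(X,y)\<in>set (seq i h). p X = y"
  show "reaches i p h" unfolding reaches_def
  proof (intro allI impI)
    fix k assume "k < length h" "owner (take k h) = Some i"
    then have "(info (take k h), h ! k) \<in> set (seq i h)" by (auto simp: set_seq)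
    then show "p (info (take k h)) = h ! k" using a by auto
  qed
qed

lemma reaches_take: "reaches i p h \<Longrightarrow> reaches i p (take m h)"
  by (auto simp: reaches_def min_def split: if_splits)

lemma reaches_pos: "reaches i p h \<Longrightarrow> k < length h \<Longrightarrow> owner (take k h) = Some i \<Longrightarrow>
   p (info (take k h)) = h ! k"
  by (auto simp: reaches_def)

lemma seq_prefix: "prefix g h \<Longrightarrow> prefix (seq i g) (seq i h)"
proof -
  assume "prefix g h"
  then obtain r where r: "h = g @ r" by (auto simp: prefix_def)
  have "prefix (seq i g) (seq i (g @ r))"
  proof (induction r rule: rev_induct)
    case Nil then show ?case by simp
  next
    case (snoc x xs) then show ?case
      by (metis append.assoc seq_snoc prefix_append)
  qed
  then show ?thesis using r by simp
qed

lemma seq_step: "k < length h \<Longrightarrow> owner (take k h) = Some i \<Longrightarrow>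
  prefix (seq i (take k h) @ [(info (take k h), h ! k)]) (seq i h)"
proof -
  assume k: "k < length h" and o: "owner (take k h) = Some i"
  have "take (Suc k) h = take k h @ [h ! k]" using k by (simp add: take_Suc_conv_app_nth)
  then have "seq i (take (Suc k) h) = seq i (take k h) @ [(info (take k h), h ! k)]"
    using o by (simp add: seq_snoc)
  then show ?thesis using seq_prefix[OF take_is_prefix, of i "Suc k" h] by simp
qed

lemma seq_len_strict: "k1 < k2 \<Longrightarrow> k2 \<le> length h \<Longrightarrow> owner (take k1 h) = Some i \<Longrightarrow>
  length (seq i (take k1 h)) < length (seq i (take k2 h))"
proof -
  assume a: "k1 < k2" "k2 \<le> length h" "owner (take k1 h) = Some i"
  have "prefix (seq i (take k1 (take k2 h)) @ [(info (take k1 (take k2 h)), take k2 h ! k1)]) (seq i (take k2 h))"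
    using a by (intro seq_step) (auto simp: min_def)
  then have "length (seq i (take k1 (take k2 h))) < length (seq i (take k2 h))"
    using prefix_length_le by fastforce
  then show ?thesis using a by (simp add: min_def)
qed

lemma dist_pos: "h \<in> H \<Longrightarrow> k1 < k2 \<Longrightarrow> k2 < length h \<Longrightarrow> owner (take k1 h) = Some i \<Longrightarrow>
   owner (take k2 h) = Some i \<Longrightarrow> info (take k1 h) \<noteq> info (take k2 h)"
proof
  assume a: "h \<in> H" "k1 < k2" "k2 < length h" "owner (take k1 h) = Some i"
    "owner (take k2 h) = Some i" "info (take k1 h) = info (take k2 h)"
  have "take k1 h \<in> D" "take k2 h \<in> D" using a take_in_D by auto
  then have "seq i (take k1 h) = seq i (take k2 h)" using a perfect_recall by blast
  moreover have "length (seq i (take k1 h)) < length (seq i (take k2 h))"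
    using a by (intro seq_len_strict) auto
  ultimately show False by simp
qed

lemma pos_unique: "h \<in> H \<Longrightarrow> k1 < length h \<Longrightarrow> k2 < length h \<Longrightarrow> owner (take k1 h) = Some i \<Longrightarrow>
   owner (take k2 h) = Some i \<Longrightarrow> info (take k1 h) = info (take k2 h) \<Longrightarrow> k1 = k2"
  by (metis dist_pos linorder_neqE_nat)

end

context wf_efg begin

lemma PiI_char: "J \<in> Inf i \<Longrightarrow> h \<in> nodes J \<Longrightarrow> p \<in> PiI i J \<longleftrightarrow> p \<in> Plans i \<and> reaches i p h"
proof -
  assume J: "J \<in> Inf i" and h: "h \<in> nodes J"
  have e: "reaches i p h' \<Longrightarrow> reaches i p h" if "h' \<in> nodes J" for h'
    using PR[OF J h that] by (simp add: reaches_iff)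
  show ?thesis using h e unfolding PiI_def by blast
qed

lemma PiS_char: "p \<in> PiS i (J, a) \<longleftrightarrow> p \<in> PiI i J \<and> p J = a"
  by (simp add: PiS_def)

lemma pfx_take: "prefix g h \<Longrightarrow> take (length g) h = g" by (auto simp: prefix_def)
lemma pfx_less: "prefix g h \<Longrightarrow> g \<noteq> h \<Longrightarrow> length g < length h"
  using prefix_length_less by (auto simp: strict_prefix_def)
lemma pfx_snoc: "prefix (g @ [x]) h \<Longrightarrow> length g < length h \<and> take (length g) h = g \<and> h ! length g = x
   \<and> take (Suc (length g)) h = g @ [x]"
  by (auto simp: prefix_def nth_append)
lemma pfx_of_take: "take (Suc k) h = g @ [x] \<Longrightarrow> prefix (g @ [x]) h"
  using take_is_prefix[of "Suc k" h] by simp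

lemma D_not_Z: "h \<in> D \<Longrightarrow> z \<in> Z \<Longrightarrow> h \<noteq> z"
  by (auto simp: D_def)

lemma seq_k0: assumes k0: "k0 \<in> H" and pre: "prefix (h0 @ [x]) k0" and oh: "owner h0 = Some i"
  and no: "\<forall>k. length h0 < k \<and> k < length k0 \<longrightarrow> owner (take k k0) \<noteq> Some i"
  shows "seq i k0 = seq i h0 @ [(info h0, x)]"
proof -
  let ?n = "Suc (length h0)"
  have le: "?n \<le> length k0" using pfx_snoc[OF pre] by simp
  have tk: "take ?n k0 = h0 @ [x]" using pfx_snoc[OF pre] by simp
  obtain d where d: "length k0 = ?n + d" using le le_Suc_ex by blast
  have sp: "[0..<length k0] = [0..<?n] @ [?n..<length k0]"
    unfolding d by (rule upt_add_eq_append) simp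
  let ?f = "\<lambda>k. if owner (take k k0) = Some i then [(info (take k k0), k0 ! k)] else []"
  have z: "concat (map ?f [?n..<length k0]) = []"
    using no by auto
  have "seq i k0 = seq i (take (length k0) k0)" by simp
  also have "\<dots> = concat (map ?f [0..<length k0])" by (subst seq_take) auto
  also have "\<dots> = concat (map ?f [0..<?n])" using sp z by simp
  also have "\<dots> = seq i (take ?n k0)" using le by (subst seq_take) auto
  also have "\<dots> = seq i h0 @ [(info h0, x)]" using tk oh by (simp add: seq_snoc)
  finally show ?thesis .
qed

lemma C_Inf: "K \<in> C i J x \<Longrightarrow> K \<in> Inf i" by (simp add: C_def)

lemma C_struct: assumes J: "J \<in> Inf i" and K: "K \<in> C i J x" and k: "k \<in> nodes K"
  shows "\<exists>h\<in>nodes J. prefix (h @ [x]) k \<and> seq i k = seq i h @ [(J, x)]"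
proof -
  have KI: "K \<in> Inf i" using K by (simp add: C_def)
  from K obtain h0 k0 where h0: "h0 \<in> nodes J" and k0: "k0 \<in> nodes K" and pre: "prefix (h0 @ [x]) k0"
    and no: "\<forall>k. length h0 < k \<and> k < length k0 \<longrightarrow> owner (take k k0) \<noteq> Some i"
    by (auto simp: C_def)
  have k0H: "k0 \<in> H" using nodes_owner[OF KI k0] D_H by blast
  have "seq i k0 = seq i h0 @ [(info h0, x)]"
    using seq_k0[OF k0H pre _ no] nodes_owner[OF J h0] by simp
  then have sk0: "seq i k0 = seq i h0 @ [(J, x)]" using nodes_owner[OF J h0] by simp
  have sk: "seq i k = seq i h0 @ [(J, x)]" using PR[OF KI k k0] sk0 by simp
  then have "(J, x) \<in> set (seq i k)" by simp
  then obtain m where m: "m < length k" "owner (take m k) = Some i" "info (take m k) = J" "k ! m = x"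
    by (auto simp: set_seq)
  have kH: "k \<in> H" using nodes_owner[OF KI k] D_H by blast
  have hm: "take m k \<in> nodes J" using nodes_in[OF take_in_D[OF kH m(1)] m(2)] m(3) by simp
  have "take (Suc m) k = take m k @ [x]" using m by (simp add: take_Suc_conv_app_nth)
  then have "prefix (take m k @ [x]) k" by (rule pfx_of_take)
  moreover have "seq i k = seq i (take m k) @ [(J, x)]" using sk PR[OF J hm h0] by simp
  ultimately show ?thesis using hm by blast
qed

lemma C_len: "J \<in> Inf i \<Longrightarrow> K \<in> C i J x \<Longrightarrow> k \<in> nodes K \<Longrightarrow> \<exists>h\<in>nodes J. length h < length k"
proof -
  assume a: "J \<in> Inf i" "K \<in> C i J x" "k \<in> nodes K"
  obtain h where h: "h \<in> nodes J" "prefix (h @ [x]) k" using C_struct[OF a] by blast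
  have "length h < length k" using pfx_snoc[OF h(2)] by simp
  then show ?thesis using h(1) by blast
qed

lemma ZIa_sub: "ZIa J a \<subseteq> ZI J"
proof
  fix z assume "z \<in> ZIa J a"
  then obtain h where h: "z \<in> Z" "h \<in> nodes J" "prefix (h @ [a]) z" by (auto simp: ZIa_def)
  then have "prefix h z" by (auto simp: prefix_def)
  then show "z \<in> ZI J" using h by (auto simp: ZI_def)
qed

lemma ZI_sub: "J \<in> Inf i \<Longrightarrow> K \<in> C i J x \<Longrightarrow> ZI K \<subseteq> ZIa J x"
proof
  fix z assume J: "J \<in> Inf i" and K: "K \<in> C i J x" and z: "z \<in> ZI K"
  then obtain k where k: "k \<in> nodes K" "prefix k z" "z \<in> Z" by (auto simp: ZI_def)
  then obtain h where "h \<in> nodes J" "prefix (h @ [x]) k" using C_struct[OF J K] by blast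
  then have "prefix (h @ [x]) z" using prefix_order.order_trans k(2) by blast
  then show "z \<in> ZIa J x" using k \<open>h \<in> nodes J\<close> by (auto simp: ZIa_def)
qed

lemma same_seq_prefix: assumes "k2 \<in> H" "owner k1 = Some i" "prefix k1 k2" "seq i k1 = seq i k2"
  shows "k1 = k2"
proof (rule ccontr)
  assume ne: "k1 \<noteq> k2"
  have l: "length k1 < length k2" using pfx_less assms(3) ne by blast
  have t: "take (length k1) k2 = k1" using pfx_take assms(3) by blast
  have "prefix (seq i (take (length k1) k2) @ [(info (take (length k1) k2), k2 ! length k1)]) (seq i k2)"
    using l assms(2) t by (intro seq_step) auto
  then have "length (seq i k1) < length (seq i k2)" using t prefix_length_le by fastforce
  then show False using assms(4) by simp
qed

lemma ZI_disj: assumes J: "J \<in> Inf i" and K1: "K1 \<in> C i J x" and K2: "K2 \<in> C i J x" and ne: "K1 \<noteq> K2"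
  shows "ZI K1 \<inter> ZI K2 = {}"
proof (rule ccontr)
  assume "ZI K1 \<inter> ZI K2 \<noteq> {}"
  then obtain z k1 k2 where z: "z \<in> Z" and k1: "k1 \<in> nodes K1" "prefix k1 z" and k2: "k2 \<in> nodes K2" "prefix k2 z"
    by (auto simp: ZI_def)
  have I1: "K1 \<in> Inf i" and I2: "K2 \<in> Inf i" using K1 K2 C_Inf by auto
  obtain h1 where h1: "h1 \<in> nodes J" "seq i k1 = seq i h1 @ [(J, x)]" using C_struct[OF J K1 k1(1)] by blast
  obtain h2 where h2: "h2 \<in> nodes J" "seq i k2 = seq i h2 @ [(J, x)]" using C_struct[OF J K2 k2(1)] by blast
  have eq: "seq i k1 = seq i k2" using h1 h2 PR[OF J h1(1) h2(1)] by simp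
  have o1: "owner k1 = Some i" "k1 \<in> H" "info k1 = K1" using nodes_owner[OF I1 k1(1)] D_H by auto
  have o2: "owner k2 = Some i" "k2 \<in> H" "info k2 = K2" using nodes_owner[OF I2 k2(1)] D_H by auto
  have "prefix k1 k2 \<or> prefix k2 k1" using k1(2) k2(2) prefix_same_cases by blast
  then have "k1 = k2"
  proof
    assume "prefix k1 k2" then show ?thesis using same_seq_prefix[of k2 k1 i] o1 o2 eq by blast
  next
    assume "prefix k2 k1" then show ?thesis using same_seq_prefix[of k1 k2 i] o1 o2 eq by simp
  qed
  then show False using o1 o2 ne by simp
qed

lemma reach_ZI: assumes J: "J \<in> Inf i" and z: "z \<in> ZI J" and r: "reaches i p z"
  shows "z \<in> ZIa J (p J)"
proof -
  obtain h where h: "h \<in> nodes J" "prefix h z" "z \<in> Z" using z by (auto simp: ZI_def)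
  have oh: "owner h = Some i" "h \<in> D" "info h = J" using nodes_owner[OF J h(1)] by auto
  have "h \<noteq> z" using D_not_Z oh h by auto
  then have l: "length h < length z" using h(2) pfx_less by blast
  have t: "take (length h) z = h" using h(2) pfx_take by blast
  have "p J = z ! length h" using reaches_pos[OF r l] t oh by simp
  moreover have "take (Suc (length h)) z = h @ [z ! length h]" using l t take_Suc_conv_app_nth[OF l] by simp
  ultimately have "take (Suc (length h)) z = h @ [p J]" by simp
  then have "prefix (h @ [p J]) z" by (rule pfx_of_take)
  then show ?thesis using h by (auto simp: ZIa_def)
qed

lemma reach_imm: assumes J: "J \<in> Inf i" and p: "p \<in> PiI i J" and z: "z \<in> ZIa J (p J)"
  and nz: "z \<notin> (\<Union>K\<in>C i J (p J). ZI K)"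
  shows "reaches i p z"
proof -
  obtain h where h: "h \<in> nodes J" "prefix (h @ [p J]) z" "z \<in> Z" using z by (auto simp: ZIa_def)
  have oh: "owner h = Some i" "h \<in> D" "info h = J" using nodes_owner[OF J h(1)] by auto
  have rh: "reaches i p h" using PiI_char[OF J h(1)] p by simp
  have zH: "z \<in> H" using h(3) by (simp add: Z_def)
  have l: "Suc (length h) \<le> length z" using pfx_snoc[OF h(2)] by simp
  have t: "take (Suc (length h)) z = h @ [p J]" using pfx_snoc[OF h(2)] by simp
  have th: "take (length h) z = h" using pfx_snoc[OF h(2)] by simp
  have zh: "z ! length h = p J" using pfx_snoc[OF h(2)] by simp
  show ?thesis unfolding reaches_def
  proof (intro allI impI)
    fix k assume k: "k < length z" "owner (take k z) = Some i"
    consider "k < length h" | "k = length h" | "length h < k" by linarith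
    then show "p (info (take k z)) = z ! k"
    proof cases
      case 1
      have "take k h = take k (take (length h) z)" using th by simp
      also have "\<dots> = take k z" using 1 by (simp add: min_def)
      finally have "take k z = take k h" by simp
      moreover have "h ! k = (take (length h) z) ! k" using th by simp
      then have "z ! k = h ! k" using 1 by simp
      ultimately show ?thesis using reaches_pos[OF rh 1] k by simp
    next
      case 2 then show ?thesis using th zh oh by simp
    next
      case 3
      define m where "m = (LEAST m. length h < m \<and> m < length z \<and> owner (take m z) = Some i)"
      have ex: "length h < k \<and> k < length z \<and> owner (take k z) = Some i" using 3 k by simp
      have m: "length h < m" "m < length z" "owner (take m z) = Some i"
        using LeastI[of "\<lambda>m. length h < m \<and> m < length z \<and> owner (take m z) = Some i", OF ex] by (auto simp: m_def)
      have mmin: "\<And>k'. length h < k' \<Longrightarrow> k' < m \<Longrightarrow> owner (take k' z) \<noteq> Some i"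
        using not_less_Least m(2) by (fastforce simp: m_def)
      have mD: "take m z \<in> D" using take_in_D[OF zH m(2)] .
      have nm: "take m z \<in> nodes (info (take m z))" "info (take m z) \<in> Inf i" using nodes_in[OF mD m(3)] by auto
      have "take (Suc (length h)) (take m z) = h @ [p J]" using t m(1) by (simp add: min_def)
      then have pre: "prefix (h @ [p J]) (take m z)" by (rule pfx_of_take)
      have nb: "\<forall>k. length h < k \<and> k < length (take m z) \<longrightarrow> owner (take k (take m z)) \<noteq> Some i"
        using mmin m(2) by (auto simp: min_def)
      have "\<exists>h'\<in>nodes (info (take m z)). prefix (h @ [p J]) h' \<and>
              (\<forall>k. length h < k \<and> k < length h' \<longrightarrow> owner (take k h') \<noteq> Some i)"
        using nm(1) pre nb by blast
      then have "\<exists>h\<in>nodes J. \<exists>h'\<in>nodes (info (take m z)). prefix (h @ [p J]) h' \<and>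
              (\<forall>k. length h < k \<and> k < length h' \<longrightarrow> owner (take k h') \<noteq> Some i)"
        using h(1) by blast
      then have "info (take m z) \<in> C i J (p J)" unfolding C_def using nm(2) by blast
      moreover have "z \<in> ZI (info (take m z))" using nm h(3) by (auto simp: ZI_def intro: take_is_prefix)
      ultimately show ?thesis using nz by blast
    qed
  qed
qed

lemma PiI_C: assumes J: "J \<in> Inf i" and p: "p \<in> PiI i J" and K: "K \<in> C i J (p J)"
  shows "p \<in> PiI i K"
proof -
  have KI: "K \<in> Inf i" using K C_Inf by auto
  obtain k where k: "k \<in> nodes K" using Inf_node[OF KI] by blast
  obtain h where h: "h \<in> nodes J" "seq i k = seq i h @ [(J, p J)]" using C_struct[OF J K k] by blast
  have "p \<in> Plans i" "reaches i p h" using PiI_char[OF J h(1)] p by auto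
  then have "reaches i p k" using h(2) by (auto simp: reaches_iff)
  then show ?thesis using PiI_char[OF KI k] \<open>p \<in> Plans i\<close> by simp
qed

end

context wf_efg begin

lemma Plans_Act: "p \<in> Plans i \<Longrightarrow> K \<in> Inf i \<Longrightarrow> p K \<in> Act K"
  by (auto simp: Plans_def PiE_def)

lemma Sigc_pos: assumes J: "J \<in> Inf i" and s: "(K, b) \<in> Sigc i J" and h: "h \<in> nodes J"
  shows "\<exists>m<length h. owner (take m h) = Some i \<and> take m h \<in> nodes K \<and> info (take m h) = K
     \<and> b \<noteq> h ! m \<and> K \<in> Inf i \<and> b \<in> Act K"
proof -
  from s have KI: "K \<in> Inf i" and pq: "preceq K J" and ne: "K \<noteq> J" and bA: "b \<in> Act K"
    and cond: "\<forall>h\<in>nodes J. \<forall>k<length h. take k h \<in> nodes K \<longrightarrow> h ! k \<noteq> b"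
    by (auto simp: Sigc_def)
  from pq obtain k h' where k: "k \<in> nodes K" and h': "h' \<in> nodes J" and pre: "prefix k h'"
    by (auto simp: preceq_def)
  have ok: "owner k = Some i" "info k = K" using nodes_owner[OF KI k] by auto
  have "info h' = J" using nodes_owner[OF J h'] by auto
  then have "k \<noteq> h'" using ok ne by auto
  then have l: "length k < length h'" using pfx_less[OF pre] by simp
  have t: "take (length k) h' = k" using pfx_take[OF pre] .
  have "(K, h' ! length k) \<in> set (seq i h')" unfolding set_seq using l t ok by auto
  then have "(K, h' ! length k) \<in> set (seq i h)" using PR[OF J h h'] by simp
  then obtain m where m: "m < length h" "owner (take m h) = Some i" "info (take m h) = K"
    unfolding set_seq by blast
  have hH: "h \<in> H" using nodes_owner[OF J h] D_H by blast
  have tm: "take m h \<in> nodes K" using nodes_in[OF take_in_D[OF hH m(1)] m(2)] m(3) by simp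
  have "h ! m \<noteq> b" using cond h m(1) tm by blast
  then show ?thesis using m tm KI bA by auto
qed

lemma PiS_reach: "qq \<in> PiS i (K, b) \<Longrightarrow> K \<in> Inf i \<Longrightarrow> k \<in> nodes K \<Longrightarrow>
   reaches i qq k \<and> qq K = b \<and> qq \<in> Plans i"
  using PiI_char[of K i k qq] by (simp add: PiS_char)

lemma take_take_less: "m1 < m2 \<Longrightarrow> take m1 (take m2 h) = take m1 h"
  by (simp add: min_def)

lemma reaches_pos2: "reaches i qq (take m2 h) \<Longrightarrow> m1 < m2 \<Longrightarrow> m2 \<le> length h \<Longrightarrow>
  owner (take m1 h) = Some i \<Longrightarrow> qq (info (take m1 h)) = h ! m1"
proof -
  assume r: "reaches i qq (take m2 h)" and a: "m1 < m2" "m2 \<le> length h" "owner (take m1 h) = Some i"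
  have "qq (info (take m1 (take m2 h))) = take m2 h ! m1"
    using a by (intro reaches_pos[OF r]) (auto simp: min_def)
  then show ?thesis using a by (simp add: min_def)
qed

lemma PiI_PiS_disj: assumes J: "J \<in> Inf i" and s: "\<sigma> \<in> Sigc i J"
  shows "PiI i J \<inter> PiS i \<sigma> = {}"
proof (rule ccontr)
  assume "PiI i J \<inter> PiS i \<sigma> \<noteq> {}"
  then obtain qq where q1: "qq \<in> PiI i J" and q2: "qq \<in> PiS i \<sigma>" by blast
  obtain K b where sk: "\<sigma> = (K, b)" by (cases \<sigma>)
  obtain h where h: "h \<in> nodes J" using Inf_node[OF J] by blast
  obtain m where m: "m < length h" "owner (take m h) = Some i" "take m h \<in> nodes K" "info (take m h) = K"
     "b \<noteq> h ! m" "K \<in> Inf i" using Sigc_pos[OF J s[unfolded sk] h] by blast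
  have "reaches i qq h" using PiI_char[OF J h] q1 by simp
  then have "qq K = h ! m" using reaches_pos m by fastforce
  moreover have "qq K = b" using q2 sk by (simp add: PiS_char)
  ultimately show False using m(5) by simp
qed

lemma Sigc_unique: assumes J: "J \<in> Inf i" and s1: "\<sigma>1 \<in> Sigc i J" and s2: "\<sigma>2 \<in> Sigc i J"
  and q1: "qq \<in> PiS i \<sigma>1" and q2: "qq \<in> PiS i \<sigma>2"
  shows "\<sigma>1 = \<sigma>2"
proof -
  obtain K1 b1 where e1: "\<sigma>1 = (K1, b1)" by (cases \<sigma>1)
  obtain K2 b2 where e2: "\<sigma>2 = (K2, b2)" by (cases \<sigma>2)
  obtain h where h: "h \<in> nodes J" using Inf_node[OF J] by blast
  obtain m1 where m1: "m1 < length h" "owner (take m1 h) = Some i" "take m1 h \<in> nodes K1" "info (take m1 h) = K1"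
     "b1 \<noteq> h ! m1" "K1 \<in> Inf i" using Sigc_pos[OF J s1[unfolded e1] h] by blast
  obtain m2 where m2: "m2 < length h" "owner (take m2 h) = Some i" "take m2 h \<in> nodes K2" "info (take m2 h) = K2"
     "b2 \<noteq> h ! m2" "K2 \<in> Inf i" using Sigc_pos[OF J s2[unfolded e2] h] by blast
  have r1: "reaches i qq (take m1 h)" "qq K1 = b1" using PiS_reach[OF q1[unfolded e1] m1(6) m1(3)] by auto
  have r2: "reaches i qq (take m2 h)" "qq K2 = b2" using PiS_reach[OF q2[unfolded e2] m2(6) m2(3)] by auto
  consider "m1 < m2" | "m2 < m1" | "m1 = m2" by linarith
  then show ?thesis
  proof cases
    case 1
    have "qq K1 = h ! m1" using reaches_pos2[OF r2(1) 1 _ m1(2)] m2(1) m1(4) by simp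
    then show ?thesis using r1 m1(5) by simp
  next
    case 2
    have "qq K2 = h ! m2" using reaches_pos2[OF r1(1) 2 _ m2(2)] m1(1) m2(4) by simp
    then show ?thesis using r2 m2(5) by simp
  next
    case 3
    then have "K1 = K2" using m1(4) m2(4) by simp
    then show ?thesis using r1 r2 e1 e2 by simp
  qed
qed

lemma Sigc_exists: assumes J: "J \<in> Inf i" and qq: "qq \<in> Plans i" and nq: "qq \<notin> PiI i J"
  shows "\<exists>\<sigma>\<in>Sigc i J. qq \<in> PiS i \<sigma>"
proof -
  obtain h where h: "h \<in> nodes J" using Inf_node[OF J] by blast
  have hH: "h \<in> H" using nodes_owner[OF J h] D_H by blast
  have "\<not> reaches i qq h" using PiI_char[OF J h] qq nq by simp
  then obtain k where k: "k < length h \<and> owner (take k h) = Some i \<and> qq (info (take k h)) \<noteq> h ! k"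
    unfolding reaches_def by blast
  define m where "m = (LEAST m. m < length h \<and> owner (take m h) = Some i \<and> qq (info (take m h)) \<noteq> h ! m)"
  have m: "m < length h" "owner (take m h) = Some i" "qq (info (take m h)) \<noteq> h ! m"
    using LeastI[of "\<lambda>m. m < length h \<and> owner (take m h) = Some i \<and> qq (info (take m h)) \<noteq> h ! m", OF k]
    by (auto simp: m_def)
  have mmin: "\<And>k. k < m \<Longrightarrow> owner (take k h) = Some i \<Longrightarrow> qq (info (take k h)) = h ! k"
  proof -
    fix k assume "k < m" "owner (take k h) = Some i"
    then show "qq (info (take k h)) = h ! k"
      using not_less_Least[of k "\<lambda>m. m < length h \<and> owner (take m h) = Some i \<and> qq (info (take m h)) \<noteq> h ! m"]
        m(1) by (auto simp: m_def)
  qed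
  define K where "K = info (take m h)"
  define b where "b = qq K"
  have tD: "take m h \<in> D" using take_in_D[OF hH m(1)] .
  have tK: "take m h \<in> nodes K" "K \<in> Inf i" using nodes_in[OF tD m(2)] by (auto simp: K_def)
  have rt: "reaches i qq (take m h)" unfolding reaches_def
  proof (intro allI impI)
    fix k assume "k < length (take m h)" "owner (take k (take m h)) = Some i"
    then show "qq (info (take k (take m h))) = take m h ! k" using mmin m(1) by (auto simp: min_def)
  qed
  have qS: "qq \<in> PiS i (K, b)" using PiI_char[OF tK(2) tK(1)] qq rt by (simp add: PiS_char b_def)
  have pq: "preceq K J" unfolding preceq_def using tK(1) h take_is_prefix by blast
  have ne: "K \<noteq> J"
  proof
    assume "K = J"
    then have "seq i (take m h) = seq i (take (length h) h)" using PR[OF J tK(1)[unfolded \<open>K = J\<close>] h] by simp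
    moreover have "length (seq i (take m h)) < length (seq i (take (length h) h))"
      using seq_len_strict[OF m(1) _ m(2)] by simp
    ultimately show False by simp
  qed
  have bA: "b \<in> Act K" using Plans_Act[OF qq tK(2)] by (simp add: b_def)
  have cond: "\<forall>h'\<in>nodes J. \<forall>k<length h'. take k h' \<in> nodes K \<longrightarrow> h' ! k \<noteq> b"
  proof (intro ballI allI impI)
    fix h' k assume h': "h' \<in> nodes J" and k: "k < length h'" and tk: "take k h' \<in> nodes K"
    have ok: "owner (take k h') = Some i" "info (take k h') = K" using nodes_owner[OF tK(2) tk] by auto
    have "(K, h' ! k) \<in> set (seq i h')" unfolding set_seq using k ok by auto
    then have "(K, h' ! k) \<in> set (seq i h)" using PR[OF J h h'] by simp
    then obtain k' where k': "k' < length h" "owner (take k' h) = Some i" "info (take k' h) = K" "h ! k' = h' ! k"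
      unfolding set_seq by blast
    have "k' = m" using pos_unique[OF hH k'(1) m(1) k'(2) m(2)] k'(3) by (simp add: K_def)
    then show "h' ! k \<noteq> b" using k'(4) m(3) by (simp add: b_def K_def)
  qed
  have "(K, b) \<in> Sigc i J" unfolding Sigc_def using tK(2) pq ne bA cond by blast
  then show ?thesis using qS by blast
qed

lemma sigma_of_eq: assumes J: "J \<in> Inf i" and s: "\<sigma> \<in> Sigc i J" and qq: "qq \<in> PiS i \<sigma>"
  shows "sigma_of i J qq = \<sigma>"
  unfolding sigma_of_def
  by (rule the_equality) (use s qq Sigc_unique[OF J] in blast)+

lemma Sigc_dich: assumes I: "I \<in> Inf i" and J: "J \<in> Inf i" and h: "h \<in> nodes J"
  and m1: "m1 < length h" "take m1 h \<in> nodes I" and s: "\<sigma> \<in> Sigc i J"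
  shows "PiS i \<sigma> \<subseteq> PiS i (I, a) \<or> PiS i \<sigma> \<inter> PiS i (I, a) = {}"
proof -
  obtain K b where e: "\<sigma> = (K, b)" by (cases \<sigma>)
  have o1: "owner (take m1 h) = Some i" "info (take m1 h) = I" using nodes_owner[OF I m1(2)] by auto
  obtain m2 where m2: "m2 < length h" "owner (take m2 h) = Some i" "take m2 h \<in> nodes K" "info (take m2 h) = K"
     "b \<noteq> h ! m2" "K \<in> Inf i" using Sigc_pos[OF J s[unfolded e] h] by blast
  consider "m2 < m1" | "m1 < m2" | "m1 = m2" by linarith
  then show ?thesis
  proof cases
    case 1
    have "qq \<notin> PiS i (I, a)" if qq: "qq \<in> PiS i \<sigma>" for qq
    proof
      assume "qq \<in> PiS i (I, a)"
      then have "reaches i qq (take m1 h)" using PiS_reach[OF _ I m1(2)] by blast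
      then have "qq K = h ! m2" using reaches_pos2[OF _ 1 _ m2(2)] m1(1) m2(4) by simp
      moreover have "qq K = b" using PiS_reach[OF qq[unfolded e] m2(6) m2(3)] by simp
      ultimately show False using m2(5) by simp
    qed
    then show ?thesis by blast
  next
    case 2
    have qr: "qq \<in> PiI i I \<and> qq I = h ! m1" if qq: "qq \<in> PiS i \<sigma>" for qq
    proof -
      have r: "reaches i qq (take m2 h)" "qq \<in> Plans i" using PiS_reach[OF qq[unfolded e] m2(6) m2(3)] by auto
      have "qq I = h ! m1" using reaches_pos2[OF r(1) 2 _ o1(1)] m2(1) o1(2) by simp
      moreover have "reaches i qq (take m1 h)" using reaches_take[OF r(1), of m1] 2 by (simp add: min_def)
      ultimately show ?thesis using PiI_char[OF I m1(2)] r(2) by simp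
    qed
    show ?thesis
    proof (cases "h ! m1 = a")
      case True
      have "PiS i \<sigma> \<subseteq> PiS i (I, a)"
      proof
        fix qq assume "qq \<in> PiS i \<sigma>" then show "qq \<in> PiS i (I, a)" using qr[of qq] True by (simp add: PiS_char)
      qed
      then show ?thesis ..
    next
      case False
      have "PiS i \<sigma> \<inter> PiS i (I, a) = {}"
      proof (rule equals0I)
        fix qq assume qa: "qq \<in> PiS i \<sigma> \<inter> PiS i (I, a)"
        then have "qq I = h ! m1" using qr[of qq] by blast
        moreover have "qq I = a" using qa by (simp add: PiS_char)
        ultimately show False using False by simp
      qed
      then show ?thesis ..
    qed
  next
    case 3
    then have KI: "K = I" using o1 m2(4) by simp
    show ?thesis
    proof (cases "b = a")
      case True then show ?thesis using e KI by simp
    next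
      case False then show ?thesis using e KI by (auto simp: PiS_char)
    qed
  qed
qed

lemma PiI_dich: assumes I: "I \<in> Inf i" and J: "J \<in> Inf i" and h: "h \<in> nodes J"
  and m1: "m1 < length h" "take m1 h \<in> nodes I"
  shows "PiI i J \<subseteq> PiS i (I, a) \<or> PiI i J \<inter> PiS i (I, a) = {}"
proof -
  have o1: "owner (take m1 h) = Some i" "info (take m1 h) = I" using nodes_owner[OF I m1(2)] by auto
  have qr: "qq \<in> PiI i I \<and> qq I = h ! m1" if qq: "qq \<in> PiI i J" for qq
  proof -
    have r: "reaches i qq h" "qq \<in> Plans i" using PiI_char[OF J h] qq by auto
    have "qq I = h ! m1" using reaches_pos[OF r(1) m1(1) o1(1)] o1(2) by simp
    moreover have "reaches i qq (take m1 h)" using reaches_take[OF r(1)] .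
    ultimately show ?thesis using PiI_char[OF I m1(2)] r(2) by simp
  qed
  show ?thesis
  proof (cases "h ! m1 = a")
    case True
    have "PiI i J \<subseteq> PiS i (I, a)"
    proof
      fix qq assume "qq \<in> PiI i J" then show "qq \<in> PiS i (I, a)" using qr[of qq] True by (simp add: PiS_char)
    qed
    then show ?thesis ..
  next
    case False
    have "PiI i J \<inter> PiS i (I, a) = {}"
    proof (rule equals0I)
      fix qq assume qa: "qq \<in> PiI i J \<inter> PiS i (I, a)"
      then have "qq I = h ! m1" using qr[of qq] by blast
      moreover have "qq I = a" using qa by (simp add: PiS_char)
      ultimately show False using False by simp
    qed
    then show ?thesis ..
  qed
qed

end

context wf_efg begin

lemma card_H_pos: "0 < card H" using root finite_H card_gt_0_iff by auto

lemma node_len: "J \<in> Inf i \<Longrightarrow> h \<in> nodes J \<Longrightarrow> length h < card H"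
  using nodes_owner D_H length_lt_card by blast

lemma Vn_stable: "J \<in> Inf i \<Longrightarrow> (\<forall>h\<in>nodes J. card H \<le> length h + n) \<Longrightarrow> n \<le> m \<Longrightarrow>
   Vn m i \<pi> J qq = Vn n i \<pi> J qq"
proof (induction n arbitrary: J m)
  case 0
  obtain h where h: "h \<in> nodes J" using Inf_node[OF 0(1)] by blast
  then show ?case using 0 node_len[OF 0(1) h] by auto
next
  case (Suc n)
  obtain m' where m: "m = Suc m'" "n \<le> m'" using Suc(4) by (cases m) auto
  have "Vn m' i \<pi> K qq = Vn n i \<pi> K qq" if K: "K \<in> C i J (qq J)" for K
  proof -
    have KI: "K \<in> Inf i" using C_Inf[OF K] .
    have "\<forall>k\<in>nodes K. card H \<le> length k + n"
    proof
      fix k assume k: "k \<in> nodes K"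
      obtain h where h: "h \<in> nodes J" "length h < length k" using C_len[OF Suc(2) K k] by blast
      then show "card H \<le> length k + n" using Suc(3) by fastforce
    qed
    then show ?thesis using Suc.IH[OF KI _ m(2)] by blast
  qed
  then show ?case using m by simp
qed

lemma V_rec: "J \<in> Inf i \<Longrightarrow> V i \<pi> J qq = imm_u i \<pi> J (qq J) + (\<Sum>K\<in>C i J (qq J). V i \<pi> K qq)"
proof -
  assume J: "J \<in> Inf i"
  obtain N where N: "card H = Suc N" using card_H_pos by (cases "card H") auto
  have "V i \<pi> K qq = Vn N i \<pi> K qq" if K: "K \<in> C i J (qq J)" for K
  proof -
    have KI: "K \<in> Inf i" using C_Inf[OF K] .
    have "\<forall>k\<in>nodes K. card H \<le> length k + N"
    proof
      fix k assume k: "k \<in> nodes K"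
      obtain h where h: "h \<in> nodes J" "length h < length k" using C_len[OF J K k] by blast
      then show "card H \<le> length k + N" using N by simp
    qed
    then show ?thesis unfolding V_def using Vn_stable[OF KI _, of N "card H"] N by simp
  qed
  then show ?thesis unfolding V_def[of i \<pi> J] N by simp
qed

definition Wf :: "'p \<Rightarrow> ('p \<Rightarrow> 'i \<Rightarrow> 'a) \<Rightarrow> 'i \<Rightarrow> ('i \<Rightarrow> 'a) \<Rightarrow> real" where
  "Wf i \<pi> J p = (\<Sum>z\<in>ZI J. if reaches i p z then (if others_reach i \<pi> z then 1 else 0) * pcz z * u i z else 0)"

lemma V_W_aux: "J \<in> Inf i \<Longrightarrow> (\<forall>h\<in>nodes J. card H \<le> length h + n) \<Longrightarrow> p \<in> PiI i J \<Longrightarrow>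
   V i \<pi> J p = Wf i \<pi> J p"
proof (induction n arbitrary: J)
  case 0
  obtain h where h: "h \<in> nodes J" using Inf_node[OF 0(1)] by blast
  then show ?case using 0 node_len[OF 0(1) h] by auto
next
  case (Suc n)
  note J = Suc(2) and p = Suc(4)
  let ?g = "\<lambda>z. if reaches i p z then (if others_reach i \<pi> z then 1 else 0) * pcz z * u i z else (0::real)"
  let ?A = "ZIa J (p J)" and ?U = "\<Union>K\<in>C i J (p J). ZI K"
  have IH: "V i \<pi> K p = Wf i \<pi> K p" if K: "K \<in> C i J (p J)" for K
  proof -
    have KI: "K \<in> Inf i" using C_Inf[OF K] .
    have "\<forall>k\<in>nodes K. card H \<le> length k + n"
    proof
      fix k assume k: "k \<in> nodes K"
      obtain h where h: "h \<in> nodes J" "length h < length k" using C_len[OF J K k] by blast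
      then show "card H \<le> length k + n" using Suc(3) by fastforce
    qed
    then show ?thesis using Suc.IH[OF KI _ PiI_C[OF J p K]] by blast
  qed
  have s1: "Wf i \<pi> J p = sum ?g ?A"
    unfolding Wf_def
  proof (rule sum.mono_neutral_right)
    show "finite (ZI J)" by (rule finite_ZI)
    show "?A \<subseteq> ZI J" by (rule ZIa_sub)
    show "\<forall>z\<in>ZI J - ?A. ?g z = 0" using reach_ZI[OF J] by auto
  qed
  have UA: "?U \<subseteq> ?A" using ZI_sub[OF J] by blast
  have s2: "sum ?g ?A = sum ?g (?A - ?U) + sum ?g ?U"
    using sum.subset_diff[OF UA finite_ZIa] .
  have s3: "sum ?g (?A - ?U) = imm_u i \<pi> J (p J)"
    unfolding imm_u_def
  proof (rule sum.cong[OF refl])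
    fix z assume "z \<in> ?A - ?U"
    then have "reaches i p z" using reach_imm[OF J p] by blast
    then show "?g z = (if others_reach i \<pi> z then 1 else 0) * pcz z * u i z" by simp
  qed
  have s4: "sum ?g ?U = (\<Sum>K\<in>C i J (p J). sum ?g (ZI K))"
  proof (rule sum.UNION_disjoint)
    show "finite (C i J (p J))" by (rule finite_C)
    show "\<forall>K\<in>C i J (p J). finite (ZI K)" using finite_ZI by blast
    show "\<forall>K1\<in>C i J (p J). \<forall>K2\<in>C i J (p J). K1 \<noteq> K2 \<longrightarrow> ZI K1 \<inter> ZI K2 = {}"
      using ZI_disj[OF J] by blast
  qed
  have s5: "(\<Sum>K\<in>C i J (p J). sum ?g (ZI K)) = (\<Sum>K\<in>C i J (p J). V i \<pi> K p)"
    using IH by (simp add: Wf_def)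
  show ?case using V_rec[OF J, of \<pi> p] s1 s2 s3 s4 s5 by simp
qed

lemma V_W: "J \<in> Inf i \<Longrightarrow> p \<in> PiI i J \<Longrightarrow> V i \<pi> J p = Wf i \<pi> J p"
  using V_W_aux[of J i "card H"] by simp

end


lemma IR_ge: "finite A \<Longrightarrow> x \<in> A \<Longrightarrow> xh \<in> A \<Longrightarrow>
  (\<Sum>t\<in>{1..T}. if a t = x then uv t xh - uv t x else 0) \<le> int_regret A a uv T"
  unfolding int_regret_def by (rule Max_ge) (auto simp: finite_image_set2)

lemma ER_ge: "finite A \<Longrightarrow> xh \<in> A \<Longrightarrow>
  (\<Sum>t\<in>{1..T}. uv t xh - uv t (a t)) \<le> ext_regret A a uv T"
  unfolding ext_regret_def by (rule Max_ge) auto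

context wf_efg begin

definition uI where "uI i \<pi>s J t x = (if \<pi>s t i \<in> PiI i J then 1 else 0) * local_u i (\<pi>s t) J x"
definition uE where "uE i \<pi>s \<sigma> J t x = (if \<pi>s t i \<in> PiS i \<sigma> then 1 else 0) * local_u i (\<pi>s t) J x"

definition GB where "GB i \<pi>s aint aext J T =
   (real (card (Act J)) + 1) * max 0 (int_regret (Act J) (\<lambda>t. aint J t) (uI i \<pi>s J) T)
   + (\<Sum>\<sigma>\<in>Sigc i J. max 0 (ext_regret (Act J) (\<lambda>t. aext \<sigma> J t) (uE i \<pi>s \<sigma> J) T))"

definition SB where "SB i \<pi>s aint aext T = (\<Sum>K\<in>Inf i. GB i \<pi>s aint aext K T)"

lemma GB_nonneg: "0 \<le> GB i \<pi>s aint aext J T"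
proof -
  have "0 \<le> (real (card (Act J)) + 1) * max 0 (int_regret (Act J) (\<lambda>t. aint J t) (uI i \<pi>s J) T)"
    by simp
  moreover have "0 \<le> (\<Sum>\<sigma>\<in>Sigc i J. max 0 (ext_regret (Act J) (\<lambda>t. aext \<sigma> J t) (uE i \<pi>s \<sigma> J) T))"
    by (rule sum_nonneg) simp
  ultimately show ?thesis unfolding GB_def by linarith
qed

lemma GB_le_SB: "J \<in> Inf i \<Longrightarrow> GB i \<pi>s aint aext J T \<le> SB i \<pi>s aint aext T"
  unfolding SB_def by (rule member_le_sum) (simp_all add: GB_nonneg finite_Inf)

lemma SB_nonneg: "0 \<le> SB i \<pi>s aint aext T"
  unfolding SB_def by (rule sum_nonneg) (rule GB_nonneg)

lemma part_one: assumes J: "J \<in> Inf i" and qq: "qq \<in> Plans i"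
  shows "(if qq \<in> PiI i J then 1 else 0) + (\<Sum>\<sigma>\<in>Sigc i J. if qq \<in> PiS i \<sigma> then 1 else 0) = (1::real)"
proof (cases "qq \<in> PiI i J")
  case True
  have "(\<Sum>\<sigma>\<in>Sigc i J. if qq \<in> PiS i \<sigma> then 1 else 0) = (0::real)"
  proof (rule sum.neutral, rule ballI)
    fix \<sigma> assume s: "\<sigma> \<in> Sigc i J"
    have "qq \<notin> PiS i \<sigma>" using PiI_PiS_disj[OF J s] True by blast
    then show "(if qq \<in> PiS i \<sigma> then 1 else 0) = (0::real)" by simp
  qed
  then show ?thesis using True by simp
next
  case False
  obtain \<sigma>0 where s0: "\<sigma>0 \<in> Sigc i J" "qq \<in> PiS i \<sigma>0" using Sigc_exists[OF J qq False] by blast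
  have "(\<Sum>\<sigma>\<in>Sigc i J. if qq \<in> PiS i \<sigma> then 1 else 0) = (\<Sum>\<sigma>\<in>Sigc i J. if \<sigma> = \<sigma>0 then 1 else (0::real))"
  proof (rule sum.cong[OF refl])
    fix \<sigma> assume s: "\<sigma> \<in> Sigc i J"
    have "qq \<in> PiS i \<sigma> \<longleftrightarrow> \<sigma> = \<sigma>0"
    proof
      assume "qq \<in> PiS i \<sigma>" then show "\<sigma> = \<sigma>0" using Sigc_unique[OF J s s0(1) _ s0(2)] by blast
    next
      assume "\<sigma> = \<sigma>0" then show "qq \<in> PiS i \<sigma>" using s0 by simp
    qed
    then show "(if qq \<in> PiS i \<sigma> then 1 else 0) = (if \<sigma> = \<sigma>0 then 1 else (0::real))" by simp
  qed
  also have "\<dots> = 1" by (subst sum.delta[OF finite_Sigc]) (simp add: s0(1))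
  finally show ?thesis using False by simp
qed

end

context wf_efg begin

lemma g_bound:
  assumes P: "\<And>t. \<pi>s t i \<in> Plans i"
    and icfr: "\<And>t J. J \<in> Inf i \<Longrightarrow> \<pi>s t i J =
        (if \<pi>s t i \<in> PiI i J then aint J t else aext (sigma_of i J (\<pi>s t i)) J t)"
    and ar: "\<And>t J. J \<in> Inf i \<Longrightarrow> aint J t \<in> Act J"
    and er: "\<And>t J \<sigma>. J \<in> Inf i \<Longrightarrow> \<sigma> \<in> Sigc i J \<Longrightarrow> aext \<sigma> J t \<in> Act J"
    and I: "I \<in> Inf i" and aI: "a \<in> Act I" and p: "p \<in> Plans i" and J: "J \<in> Inf i"
    and inv: "J = I \<or> (\<forall>h\<in>nodes J. (I, p I) \<in> set (seq i h))"
  shows "(\<Sum>t\<in>{1..T}. (if \<pi>s t i \<in> PiS i (I, a) then 1 else 0) *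
            (local_u i (\<pi>s t) J (p J) - local_u i (\<pi>s t) J (\<pi>s t i J))) \<le> GB i \<pi>s aint aext J T"
    (is "(\<Sum>t\<in>{1..T}. ?w t * ?D t) \<le> _")
proof -
  let ?IR = "int_regret (Act J) (\<lambda>t. aint J t) (uI i \<pi>s J) T"
  let ?ER = "\<lambda>\<sigma>. ext_regret (Act J) (\<lambda>t. aext \<sigma> J t) (uE i \<pi>s \<sigma> J) T"
  have pJ: "p J \<in> Act J" using Plans_Act[OF p J] .
  have ERs: "0 \<le> (\<Sum>\<sigma>\<in>Sigc i J. max 0 (?ER \<sigma>))" by (rule sum_nonneg) simp
  have GBe: "GB i \<pi>s aint aext J T = (real (card (Act J)) + 1) * max 0 ?IR + (\<Sum>\<sigma>\<in>Sigc i J. max 0 (?ER \<sigma>))"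
    by (simp add: GB_def)
  show ?thesis
  proof (cases "J = I")
    case True
    have eq: "?w t * ?D t = (if aint I t = a then uI i \<pi>s I t (p I) - uI i \<pi>s I t a else 0)" for t
    proof (cases "\<pi>s t i \<in> PiI i I")
      case True2: True
      have "\<pi>s t i I = aint I t" using icfr[OF I, of t] True2 by simp
      then show ?thesis using True True2 by (simp add: PiS_char uI_def)
    next
      case False
      then show ?thesis using True by (simp add: PiS_char uI_def)
    qed
    have "(\<Sum>t\<in>{1..T}. ?w t * ?D t) = (\<Sum>t\<in>{1..T}. if aint I t = a then uI i \<pi>s I t (p I) - uI i \<pi>s I t a else 0)"
      using eq by simp
    also have "\<dots> \<le> int_regret (Act I) (\<lambda>t. aint I t) (uI i \<pi>s I) T"
      by (rule IR_ge[OF finite_Act aI Plans_Act[OF p I]])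
    also have "\<dots> = ?IR" using True by simp
    also have "\<dots> \<le> max 0 ?IR" by simp
    also have "\<dots> \<le> (real (card (Act J)) + 1) * max 0 ?IR" by (simp add: algebra_simps)
    finally show ?thesis using GBe ERs by linarith
  next
    case False
    then have inv2: "\<forall>h\<in>nodes J. (I, p I) \<in> set (seq i h)" using inv by simp
    obtain h where h: "h \<in> nodes J" using Inf_node[OF J] by blast
    have hH: "h \<in> H" using nodes_owner[OF J h] D_H by blast
    obtain m1 where m1: "m1 < length h" "owner (take m1 h) = Some i" "info (take m1 h) = I"
      using inv2 h unfolding set_seq by blast
    have tI: "take m1 h \<in> nodes I" using nodes_in[OF take_in_D[OF hH m1(1)] m1(2)] m1(3) by simp
    let ?e = "\<lambda>t. ?w t * ?D t"
    have split: "?e t = (if \<pi>s t i \<in> PiI i J then 1 else 0) * ?e t +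
        (\<Sum>\<sigma>\<in>Sigc i J. (if \<pi>s t i \<in> PiS i \<sigma> then 1 else 0) * ?e t)" for t
    proof -
      have "?e t = ((if \<pi>s t i \<in> PiI i J then 1 else 0) + (\<Sum>\<sigma>\<in>Sigc i J. if \<pi>s t i \<in> PiS i \<sigma> then 1 else 0)) * ?e t"
        using part_one[OF J P[of t]] by simp
      also have "\<dots> = (if \<pi>s t i \<in> PiI i J then 1 else 0) * ?e t +
        (\<Sum>\<sigma>\<in>Sigc i J. (if \<pi>s t i \<in> PiS i \<sigma> then 1 else 0) * ?e t)"
        by (simp add: distrib_right sum_distrib_right)
      finally show ?thesis .
    qed
    have sumsplit: "(\<Sum>t\<in>{1..T}. ?e t) = (\<Sum>t\<in>{1..T}. (if \<pi>s t i \<in> PiI i J then 1 else 0) * ?e t) +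
        (\<Sum>\<sigma>\<in>Sigc i J. \<Sum>t\<in>{1..T}. (if \<pi>s t i \<in> PiS i \<sigma> then 1 else 0) * ?e t)"
      by (subst split) (simp add: sum.distrib sum.swap[of _ "Sigc i J"])
    have part1: "(\<Sum>t\<in>{1..T}. (if \<pi>s t i \<in> PiI i J then 1 else 0) * ?e t) \<le> real (card (Act J)) * max 0 ?IR"
    proof (cases "PiI i J \<subseteq> PiS i (I, a)")
      case True
      have eqt: "(if \<pi>s t i \<in> PiI i J then 1 else 0) * ?e t =
          (\<Sum>x\<in>Act J. if aint J t = x then uI i \<pi>s J t (p J) - uI i \<pi>s J t x else 0)" for t
      proof (cases "\<pi>s t i \<in> PiI i J")
        case True2: True
        have "\<pi>s t i J = aint J t" using icfr[OF J, of t] True2 by simp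
        moreover have "\<pi>s t i \<in> PiS i (I, a)" using True True2 by blast
        moreover have "(\<Sum>x\<in>Act J. if aint J t = x then uI i \<pi>s J t (p J) - uI i \<pi>s J t x else 0) =
            uI i \<pi>s J t (p J) - uI i \<pi>s J t (aint J t)"
          using ar[OF J, of t] by (subst sum.delta'[OF finite_Act]) simp
        ultimately show ?thesis using True2 by (simp add: uI_def)
      next
        case False
        then have z: "uI i \<pi>s J t x = 0" for x by (simp add: uI_def)
        have "(\<Sum>x\<in>Act J. if aint J t = x then uI i \<pi>s J t (p J) - uI i \<pi>s J t x else 0) = (\<Sum>x\<in>Act J. (0::real))"
          by (rule sum.cong) (simp_all add: z)
        then show ?thesis using False by simp
      qed
      have "(\<Sum>t\<in>{1..T}. (if \<pi>s t i \<in> PiI i J then 1 else 0) * ?e t) =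
          (\<Sum>x\<in>Act J. \<Sum>t\<in>{1..T}. if aint J t = x then uI i \<pi>s J t (p J) - uI i \<pi>s J t x else 0)"
        by (simp add: eqt sum.swap[of _ "Act J"])
      also have "\<dots> \<le> (\<Sum>x\<in>Act J. ?IR)"
        by (rule sum_mono) (rule IR_ge[OF finite_Act _ pJ], simp)
      also have "\<dots> = real (card (Act J)) * ?IR" by simp
      also have "\<dots> \<le> real (card (Act J)) * max 0 ?IR" by (rule mult_left_mono) auto
      finally show ?thesis .
    next
      case False
      then have dj: "PiI i J \<inter> PiS i (I, a) = {}" using PiI_dich[OF I J h m1(1) tI, of a] by blast
      have z: "(if \<pi>s t i \<in> PiI i J then 1 else 0) * ?e t = 0" for t
        using dj by (auto simp: disjoint_iff)
      have "(\<Sum>t\<in>{1..T}. (if \<pi>s t i \<in> PiI i J then 1 else 0) * ?e t) = 0"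
        by (rule sum.neutral) (use z in blast)
      then show ?thesis by simp
    qed
    have part2: "(\<Sum>t\<in>{1..T}. (if \<pi>s t i \<in> PiS i \<sigma> then 1 else 0) * ?e t) \<le> max 0 (?ER \<sigma>)"
      if s: "\<sigma> \<in> Sigc i J" for \<sigma>
    proof (cases "PiS i \<sigma> \<subseteq> PiS i (I, a)")
      case True
      have eqt: "(if \<pi>s t i \<in> PiS i \<sigma> then 1 else 0) * ?e t =
          uE i \<pi>s \<sigma> J t (p J) - uE i \<pi>s \<sigma> J t (aext \<sigma> J t)" for t
      proof (cases "\<pi>s t i \<in> PiS i \<sigma>")
        case True2: True
        have "\<pi>s t i \<notin> PiI i J" using PiI_PiS_disj[OF J s] True2 by blast
        moreover have "sigma_of i J (\<pi>s t i) = \<sigma>" using sigma_of_eq[OF J s True2] .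
        ultimately have "\<pi>s t i J = aext \<sigma> J t" using icfr[OF J, of t] by simp
        moreover have "\<pi>s t i \<in> PiS i (I, a)" using True True2 by blast
        ultimately show ?thesis using True2 by (simp add: uE_def)
      next
        case False
        then show ?thesis by (simp add: uE_def)
      qed
      have "(\<Sum>t\<in>{1..T}. (if \<pi>s t i \<in> PiS i \<sigma> then 1 else 0) * ?e t) =
          (\<Sum>t\<in>{1..T}. uE i \<pi>s \<sigma> J t (p J) - uE i \<pi>s \<sigma> J t (aext \<sigma> J t))"
        by (simp add: eqt)
      also have "\<dots> \<le> ?ER \<sigma>" by (rule ER_ge[OF finite_Act pJ])
      also have "\<dots> \<le> max 0 (?ER \<sigma>)" by simp
      finally show ?thesis .
    next
      case False
      then have dj: "PiS i \<sigma> \<inter> PiS i (I, a) = {}" using Sigc_dich[OF I J h m1(1) tI s, of a] by blast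
      have z: "(if \<pi>s t i \<in> PiS i \<sigma> then 1 else 0) * ?e t = 0" for t
        using dj by (auto simp: disjoint_iff)
      have "(\<Sum>t\<in>{1..T}. (if \<pi>s t i \<in> PiS i \<sigma> then 1 else 0) * ?e t) = 0"
        by (rule sum.neutral) (use z in blast)
      then show ?thesis by simp
    qed
    have "(\<Sum>t\<in>{1..T}. ?e t) \<le> real (card (Act J)) * max 0 ?IR + (\<Sum>\<sigma>\<in>Sigc i J. max 0 (?ER \<sigma>))"
      unfolding sumsplit using part1 sum_mono[OF part2] by (intro add_mono) auto
    also have "\<dots> \<le> GB i \<pi>s aint aext J T" unfolding GBe by (simp add: algebra_simps)
    finally show ?thesis .
  qed
qed

end

context wf_efg begin

lemma F_bound:
  assumes P: "\<And>t. \<pi>s t i \<in> Plans i"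
    and icfr: "\<And>t J. J \<in> Inf i \<Longrightarrow> \<pi>s t i J =
        (if \<pi>s t i \<in> PiI i J then aint J t else aext (sigma_of i J (\<pi>s t i)) J t)"
    and ar: "\<And>t J. J \<in> Inf i \<Longrightarrow> aint J t \<in> Act J"
    and er: "\<And>t J \<sigma>. J \<in> Inf i \<Longrightarrow> \<sigma> \<in> Sigc i J \<Longrightarrow> aext \<sigma> J t \<in> Act J"
    and I: "I \<in> Inf i" and aI: "a \<in> Act I" and p: "p \<in> Plans i"
  shows "(\<Sum>t\<in>{1..T}. (if \<pi>s t i \<in> PiS i (I, a) then 1 else 0) *
            (V i (\<pi>s t) I p - V i (\<pi>s t) I (\<pi>s t i))) \<le>
         (real (card (Inf i)) + 1) ^ card H * SB i \<pi>s aint aext T"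
proof -
  let ?w = "\<lambda>t. (if \<pi>s t i \<in> PiS i (I, a) then 1 else 0::real)"
  let ?F = "\<lambda>J. (\<Sum>t\<in>{1..T}. ?w t * (V i (\<pi>s t) J p - V i (\<pi>s t) J (\<pi>s t i)))"
  let ?M = "real (card (Inf i)) + 1"
  let ?S = "SB i \<pi>s aint aext T"
  have S0: "0 \<le> ?S" by (rule SB_nonneg)
  have aux: "J \<in> Inf i \<Longrightarrow> (J = I \<or> (\<forall>h\<in>nodes J. (I, p I) \<in> set (seq i h))) \<Longrightarrow>
      (\<forall>h\<in>nodes J. card H \<le> length h + n) \<Longrightarrow> ?F J \<le> ?M ^ n * ?S" for J n
  proof (induction n arbitrary: J)
    case 0
    obtain h where h: "h \<in> nodes J" using Inf_node[OF 0(1)] by blast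
    then show ?case using 0 node_len[OF 0(1) h] by auto
  next
    case (Suc n)
    note J = Suc(2) and inv = Suc(3)
    have dec: "V i (\<pi>s t) J p - V i (\<pi>s t) J (\<pi>s t i) =
        (local_u i (\<pi>s t) J (p J) - local_u i (\<pi>s t) J (\<pi>s t i J)) +
        (\<Sum>K\<in>C i J (p J). V i (\<pi>s t) K p - V i (\<pi>s t) K (\<pi>s t i))" for t
      using V_rec[OF J, of "\<pi>s t" p] V_rec[OF J, of "\<pi>s t" "\<pi>s t i"]
      by (simp add: local_u_def sum_subtractf)
    have Fdec: "?F J = (\<Sum>t\<in>{1..T}. ?w t * (local_u i (\<pi>s t) J (p J) - local_u i (\<pi>s t) J (\<pi>s t i J)))
        + (\<Sum>K\<in>C i J (p J). ?F K)"
      by (simp add: dec distrib_left sum.distrib sum_distrib_left sum.swap[of _ "C i J (p J)"])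
    have g: "(\<Sum>t\<in>{1..T}. ?w t * (local_u i (\<pi>s t) J (p J) - local_u i (\<pi>s t) J (\<pi>s t i J))) \<le> ?S"
      using g_bound[where \<pi>s=\<pi>s and i=i and aint=aint and aext=aext, OF P icfr ar er I aI p J inv, of T] GB_le_SB[OF J, of \<pi>s aint aext T] by linarith
    have FK: "?F K \<le> ?M ^ n * ?S" if K: "K \<in> C i J (p J)" for K
    proof -
      have KI: "K \<in> Inf i" using C_Inf[OF K] .
      have invK: "\<forall>k\<in>nodes K. (I, p I) \<in> set (seq i k)"
      proof
        fix k assume k: "k \<in> nodes K"
        obtain h where h: "h \<in> nodes J" "seq i k = seq i h @ [(J, p J)]" using C_struct[OF J K k] by blast
        show "(I, p I) \<in> set (seq i k)"
        proof (cases "J = I")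
          case True then show ?thesis using h(2) by simp
        next
          case False then show ?thesis using inv h by simp
        qed
      qed
      have mK: "\<forall>k\<in>nodes K. card H \<le> length k + n"
      proof
        fix k assume k: "k \<in> nodes K"
        obtain h where h: "h \<in> nodes J" "length h < length k" using C_len[OF J K k] by blast
        then show "card H \<le> length k + n" using Suc(4) by fastforce
      qed
      show ?thesis using Suc.IH[OF KI _ mK] invK by blast
    qed
    have "(\<Sum>K\<in>C i J (p J). ?F K) \<le> (\<Sum>K\<in>C i J (p J). ?M ^ n * ?S)" using FK by (rule sum_mono)
    also have "\<dots> = real (card (C i J (p J))) * (?M ^ n * ?S)" by simp
    also have "\<dots> \<le> real (card (Inf i)) * (?M ^ n * ?S)"
    proof (rule mult_right_mono)
      have "C i J (p J) \<subseteq> Inf i" using C_Inf by blast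
      then show "real (card (C i J (p J))) \<le> real (card (Inf i))" using card_mono[OF finite_Inf] by simp
      show "0 \<le> ?M ^ n * ?S" using S0 by simp
    qed
    finally have sK: "(\<Sum>K\<in>C i J (p J). ?F K) \<le> real (card (Inf i)) * (?M ^ n * ?S)" .
    have M1: "1 \<le> ?M ^ n" by simp
    have "?S + real (card (Inf i)) * (?M ^ n * ?S) \<le> ?M ^ n * ?S + real (card (Inf i)) * (?M ^ n * ?S)"
      using mult_right_mono[OF M1 S0] by simp
    also have "\<dots> = ?M ^ Suc n * ?S" by (simp add: algebra_simps)
    finally show ?case using Fdec g sK by linarith
  qed
  show ?thesis using aux[OF I _, of "card H"] by simp
qed

end


lemma emp_sum: assumes S: "finite S"
  shows "(\<Sum>x\<in>S. emp_freq f T x) = (\<Sum>t\<in>{1..T}. if f t \<in> S then 1 else 0) / real T"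
proof -
  have c: "real (card {t\<in>{1..T}. f t = x}) = (\<Sum>t\<in>{1..T}. if f t = x then 1 else 0)" for x
    unfolding real_of_card by (rule sum.inter_filter) simp
  have "(\<Sum>x\<in>S. emp_freq f T x) = (\<Sum>x\<in>S. \<Sum>t\<in>{1..T}. if f t = x then 1 else 0) / real T"
    unfolding emp_freq_def c by (simp add: sum_divide_distrib)
  also have "(\<Sum>x\<in>S. \<Sum>t\<in>{1..T}. if f t = x then 1 else (0::real)) = (\<Sum>t\<in>{1..T}. \<Sum>x\<in>S. if f t = x then 1 else 0)"
    by (rule sum.swap)
  also have "\<dots> = (\<Sum>t\<in>{1..T}. if f t \<in> S then 1 else 0)"
    by (rule sum.cong[OF refl]) (simp add: sum.delta'[OF S])
  finally show ?thesis .
qed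

context wf_efg begin

lemma RHS_t: assumes iP: "i \<in> Pl" and I: "I \<in> Inf i" and \<rho>: "\<rho> \<in> Joint"
  shows "(\<Sum>z\<in>ZIa I a. (if \<forall>j\<in>Pl. reaches j (\<rho> j) z then 1 else 0) * pcz z * u i z) =
         (if \<rho> i \<in> PiS i (I, a) then 1 else 0) * Wf i \<rho> I (\<rho> i)"
proof -
  have \<rho>i: "\<rho> i \<in> Plans i" using \<rho> iP by (auto simp: Joint_def PiE_def)
  have all: "(\<forall>j\<in>Pl. reaches j (\<rho> j) z) \<longleftrightarrow> reaches i (\<rho> i) z \<and> others_reach i \<rho> z" for z
    using iP by (auto simp: others_reach_def)
  have wz: "\<rho> i \<in> PiS i (I, a)" if z: "z \<in> ZIa I a" and r: "reaches i (\<rho> i) z" for z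
  proof -
    obtain h where h: "h \<in> nodes I" "prefix (h @ [a]) z" using z by (auto simp: ZIa_def)
    have ps: "length h < length z" "take (length h) z = h" "z ! length h = a" using pfx_snoc[OF h(2)] by auto
    have oh: "owner h = Some i" "info h = I" using nodes_owner[OF I h(1)] by auto
    have "reaches i (\<rho> i) h" using reaches_take[OF r, of "length h"] ps by simp
    then have "\<rho> i \<in> PiI i I" using PiI_char[OF I h(1)] \<rho>i by simp
    moreover have "\<rho> i I = a" using reaches_pos[OF r ps(1)] ps oh by simp
    ultimately show ?thesis by (simp add: PiS_char)
  qed
  show ?thesis
  proof (cases "\<rho> i \<in> PiS i (I, a)")
    case False
    have "(\<Sum>z\<in>ZIa I a. (if \<forall>j\<in>Pl. reaches j (\<rho> j) z then 1 else 0) * pcz z * u i z) = 0"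
    proof (rule sum.neutral, rule ballI)
      fix z assume z: "z \<in> ZIa I a"
      have "\<not> (\<forall>j\<in>Pl. reaches j (\<rho> j) z)" using wz[OF z] False all by blast
      then show "(if \<forall>j\<in>Pl. reaches j (\<rho> j) z then 1 else 0) * pcz z * u i z = 0"
        by (simp only: if_False if_not_P)
    qed
    then show ?thesis using False by simp
  next
    case True
    have aI: "\<rho> i I = a" using True by (simp add: PiS_char)
    let ?g = "\<lambda>z. if reaches i (\<rho> i) z then (if others_reach i \<rho> z then 1 else 0) * pcz z * u i z else (0::real)"
    have "Wf i \<rho> I (\<rho> i) = sum ?g (ZIa I a)"
      unfolding Wf_def
    proof (rule sum.mono_neutral_right)
      show "finite (ZI I)" by (rule finite_ZI)
      show "ZIa I a \<subseteq> ZI I" by (rule ZIa_sub)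
      show "\<forall>z\<in>ZI I - ZIa I a. ?g z = 0"
      proof
        fix z assume z: "z \<in> ZI I - ZIa I a"
        have "\<not> reaches i (\<rho> i) z"
        proof
          assume r: "reaches i (\<rho> i) z"
          have "z \<in> ZIa I (\<rho> i I)" using reach_ZI[OF I _ r] z by blast
          then show False using z aI by simp
        qed
        then show "?g z = 0" by simp
      qed
    qed
    also have "\<dots> = (\<Sum>z\<in>ZIa I a. (if \<forall>j\<in>Pl. reaches j (\<rho> j) z then 1 else 0) * pcz z * u i z)"
      by (rule sum.cong[OF refl]) (simp add: all)
    finally show ?thesis using True by simp
  qed
qed

end

context wf_efg begin

lemma dev_bound:
  assumes P: "\<And>t. \<pi>s t i \<in> Plans i"
    and icfr: "\<And>t J. J \<in> Inf i \<Longrightarrow> \<pi>s t i J =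
        (if \<pi>s t i \<in> PiI i J then aint J t else aext (sigma_of i J (\<pi>s t i)) J t)"
    and ar: "\<And>t J. J \<in> Inf i \<Longrightarrow> aint J t \<in> Act J"
    and er: "\<And>t J \<sigma>. J \<in> Inf i \<Longrightarrow> \<sigma> \<in> Sigc i J \<Longrightarrow> aext \<sigma> J t \<in> Act J"
    and iP: "i \<in> Pl" and Jn: "\<And>t. \<pi>s t \<in> Joint"
    and I: "I \<in> Inf i" and aI: "a \<in> Act I" and mh: "\<mu>h \<in> Delta (PiI i I)" and T: "0 < T"
  shows "(\<Sum>z\<in>ZI I. psig i (I, a) (emp_freq \<pi>s T) \<mu>h z * u i z) -
         (\<Sum>z\<in>ZIa I a. q (emp_freq \<pi>s T) z * u i z) \<le>
         (real (card (Inf i)) + 1) ^ card H * SB i \<pi>s aint aext T / real T"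
proof -
  define \<mu> where "\<mu> = emp_freq \<pi>s T"
  define w where "w t = (if \<pi>s t i \<in> PiS i (I, a) then 1 else 0::real)" for t
  define W where "W t p = Wf i (\<pi>s t) I p" for t p
  define B where "B = (real (card (Inf i)) + 1) ^ card H * SB i \<pi>s aint aext T"
  define X where "X p t z = \<mu>h p * (w t * (if reaches i p z then (if others_reach i (\<pi>s t) z then 1 else 0::real) * pcz z * u i z else 0))" for p t z
  have mh0: "\<And>p. 0 \<le> \<mu>h p" "\<And>p. p \<notin> PiI i I \<Longrightarrow> \<mu>h p = 0" "sum \<mu>h (PiI i I) = 1"
    using mh by (auto simp: Delta_def)
  have PiIP: "PiI i I \<subseteq> Plans i" by (auto simp: PiI_def)
  have fs: "finite {\<pi>\<in>Joint. Q \<pi>}" for Q using finite_Joint by simp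
  have f1: "(\<Sum>\<pi>\<in>{\<pi>\<in>Joint. \<pi> i \<in> PiS i (I, a) \<and> others_reach i \<pi> z}. \<mu> \<pi>) =
      (\<Sum>t\<in>{1..T}. w t * (if others_reach i (\<pi>s t) z then 1 else 0::real)) / real T" for z
  proof -
    have "(\<Sum>\<pi>\<in>{\<pi>\<in>Joint. \<pi> i \<in> PiS i (I, a) \<and> others_reach i \<pi> z}. \<mu> \<pi>) =
      (\<Sum>t\<in>{1..T}. if \<pi>s t \<in> {\<pi>\<in>Joint. \<pi> i \<in> PiS i (I, a) \<and> others_reach i \<pi> z} then 1 else 0) / real T"
      unfolding \<mu>_def by (rule emp_sum[OF fs])
    also have "(\<Sum>t\<in>{1..T}. if \<pi>s t \<in> {\<pi>\<in>Joint. \<pi> i \<in> PiS i (I, a) \<and> others_reach i \<pi> z} then 1 else 0)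
        = (\<Sum>t\<in>{1..T}. w t * (if others_reach i (\<pi>s t) z then 1 else 0::real))"
      by (rule sum.cong[OF refl]) (simp add: w_def Jn)
    finally show ?thesis .
  qed
  have f2: "(\<Sum>p\<in>PiZ i z. \<mu>h p) = (\<Sum>p\<in>PiI i I. if reaches i p z then \<mu>h p else 0)" for z
  proof -
    have "(\<Sum>p\<in>PiZ i z. \<mu>h p) = (\<Sum>p\<in>Plans i. if reaches i p z then \<mu>h p else 0)"
      unfolding PiZ_def by (rule sum.inter_filter[OF finite_Plans])
    also have "\<dots> = (\<Sum>p\<in>PiI i I. if reaches i p z then \<mu>h p else 0)"
      by (rule sum.mono_neutral_left[OF finite_Plans PiIP, symmetric]) (auto simp: mh0(2))
    finally show ?thesis .
  qed
  have pz: "psig i (I, a) \<mu> \<mu>h z * u i z = (\<Sum>p\<in>PiI i I. \<Sum>t\<in>{1..T}. X p t z) / real T" for z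
  proof -
    have "psig i (I, a) \<mu> \<mu>h z * u i z =
        ((\<Sum>t\<in>{1..T}. w t * (if others_reach i (\<pi>s t) z then 1 else 0::real)) * (\<Sum>p\<in>PiI i I. if reaches i p z then \<mu>h p else 0) * (pcz z * u i z)) / real T"
      unfolding psig_def f1 f2 by simp
    also have "(\<Sum>t\<in>{1..T}. w t * (if others_reach i (\<pi>s t) z then 1 else 0::real)) * (\<Sum>p\<in>PiI i I. if reaches i p z then \<mu>h p else 0) * (pcz z * u i z)
        = (\<Sum>p\<in>PiI i I. \<Sum>t\<in>{1..T}. (w t * (if others_reach i (\<pi>s t) z then 1 else 0::real)) * (if reaches i p z then \<mu>h p else 0) * (pcz z * u i z))"
      by (simp add: sum_distrib_left sum_distrib_right)
    also have "\<dots> = (\<Sum>p\<in>PiI i I. \<Sum>t\<in>{1..T}. X p t z)"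
      by (intro sum.cong refl) (simp add: X_def)
    finally show ?thesis .
  qed
  have lhs: "(\<Sum>z\<in>ZI I. psig i (I, a) \<mu> \<mu>h z * u i z) = (\<Sum>p\<in>PiI i I. \<mu>h p * (\<Sum>t\<in>{1..T}. w t * W t p)) / real T"
  proof -
    have "(\<Sum>z\<in>ZI I. psig i (I, a) \<mu> \<mu>h z * u i z) = (\<Sum>z\<in>ZI I. \<Sum>p\<in>PiI i I. \<Sum>t\<in>{1..T}. X p t z) / real T"
      unfolding pz by (simp add: sum_divide_distrib)
    also have "(\<Sum>z\<in>ZI I. \<Sum>p\<in>PiI i I. \<Sum>t\<in>{1..T}. X p t z) = (\<Sum>p\<in>PiI i I. \<Sum>z\<in>ZI I. \<Sum>t\<in>{1..T}. X p t z)"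
      by (rule sum.swap)
    also have "\<dots> = (\<Sum>p\<in>PiI i I. \<Sum>t\<in>{1..T}. \<Sum>z\<in>ZI I. X p t z)"
      by (rule sum.cong[OF refl]) (rule sum.swap)
    also have "\<dots> = (\<Sum>p\<in>PiI i I. \<mu>h p * (\<Sum>t\<in>{1..T}. w t * W t p))"
      by (simp add: X_def W_def Wf_def sum_distrib_left)
    finally show ?thesis .
  qed
  have rhs: "(\<Sum>z\<in>ZIa I a. q \<mu> z * u i z) = (\<Sum>t\<in>{1..T}. w t * W t (\<pi>s t i)) / real T"
  proof -
    have qz: "q \<mu> z = (\<Sum>t\<in>{1..T}. if \<forall>j\<in>Pl. reaches j (\<pi>s t j) z then 1 else 0) / real T * pcz z" for z
    proof -
      have "(\<Sum>\<pi>\<in>{\<pi>\<in>Joint. \<forall>j\<in>Pl. reaches j (\<pi> j) z}. \<mu> \<pi>) =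
          (\<Sum>t\<in>{1..T}. if \<pi>s t \<in> {\<pi>\<in>Joint. \<forall>j\<in>Pl. reaches j (\<pi> j) z} then 1 else 0) / real T"
        unfolding \<mu>_def by (rule emp_sum[OF fs])
      also have "(\<Sum>t\<in>{1..T}. if \<pi>s t \<in> {\<pi>\<in>Joint. \<forall>j\<in>Pl. reaches j (\<pi> j) z} then 1 else 0) =
          (\<Sum>t\<in>{1..T}. if \<forall>j\<in>Pl. reaches j (\<pi>s t j) z then 1 else (0::real))"
        by (rule sum.cong[OF refl]) (simp add: Jn)
      finally show ?thesis unfolding q_def by simp
    qed
    have "(\<Sum>z\<in>ZIa I a. q \<mu> z * u i z) =
        (\<Sum>z\<in>ZIa I a. \<Sum>t\<in>{1..T}. (if \<forall>j\<in>Pl. reaches j (\<pi>s t j) z then 1 else 0) * pcz z * u i z) / real T"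
      unfolding qz by (simp add: sum_divide_distrib sum_distrib_right)
    also have "(\<Sum>z\<in>ZIa I a. \<Sum>t\<in>{1..T}. (if \<forall>j\<in>Pl. reaches j (\<pi>s t j) z then 1 else 0) * pcz z * u i z) =
        (\<Sum>t\<in>{1..T}. \<Sum>z\<in>ZIa I a. (if \<forall>j\<in>Pl. reaches j (\<pi>s t j) z then 1 else 0) * pcz z * u i z)"
      by (rule sum.swap)
    also have "\<dots> = (\<Sum>t\<in>{1..T}. w t * W t (\<pi>s t i))"
      by (rule sum.cong[OF refl]) (simp add: RHS_t[OF iP I Jn] w_def W_def)
    finally show ?thesis .
  qed
  have Fp: "(\<Sum>t\<in>{1..T}. w t * (W t p - W t (\<pi>s t i))) \<le> B" if p: "p \<in> PiI i I" for p
  proof -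
    have "(\<Sum>t\<in>{1..T}. w t * (W t p - W t (\<pi>s t i))) =
        (\<Sum>t\<in>{1..T}. (if \<pi>s t i \<in> PiS i (I, a) then 1 else 0) * (V i (\<pi>s t) I p - V i (\<pi>s t) I (\<pi>s t i)))"
    proof (rule sum.cong[OF refl])
      fix t
      have "W t p = V i (\<pi>s t) I p" using V_W[OF I p] by (simp add: W_def)
      moreover have "\<pi>s t i \<in> PiS i (I, a) \<Longrightarrow> W t (\<pi>s t i) = V i (\<pi>s t) I (\<pi>s t i)"
        using V_W[OF I] by (simp add: W_def PiS_char)
      ultimately show "w t * (W t p - W t (\<pi>s t i)) =
          (if \<pi>s t i \<in> PiS i (I, a) then 1 else 0) * (V i (\<pi>s t) I p - V i (\<pi>s t) I (\<pi>s t i))"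
        by (simp add: w_def)
    qed
    also have "\<dots> \<le> B" unfolding B_def
      using F_bound[where \<pi>s=\<pi>s and i=i and aint=aint and aext=aext and T=T, OF P icfr ar er I aI subsetD[OF PiIP that]] .
    finally show ?thesis .
  qed
  have comb: "(\<Sum>p\<in>PiI i I. \<mu>h p * (\<Sum>t\<in>{1..T}. w t * W t p)) - (\<Sum>t\<in>{1..T}. w t * W t (\<pi>s t i)) =
      (\<Sum>p\<in>PiI i I. \<mu>h p * (\<Sum>t\<in>{1..T}. w t * (W t p - W t (\<pi>s t i))))"
  proof -
    let ?Y = "\<Sum>t\<in>{1..T}. w t * W t (\<pi>s t i)"
    have e1: "(\<Sum>t\<in>{1..T}. w t * (W t p - W t (\<pi>s t i))) = (\<Sum>t\<in>{1..T}. w t * W t p) - ?Y" for p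
      by (simp add: right_diff_distrib sum_subtractf)
    have e2: "(\<Sum>p\<in>PiI i I. \<mu>h p * ((\<Sum>t\<in>{1..T}. w t * W t p) - ?Y)) =
        (\<Sum>p\<in>PiI i I. \<mu>h p * (\<Sum>t\<in>{1..T}. w t * W t p)) - (\<Sum>p\<in>PiI i I. \<mu>h p * ?Y)"
      by (simp add: right_diff_distrib sum_subtractf)
    have e3: "(\<Sum>p\<in>PiI i I. \<mu>h p * ?Y) = ?Y"
      using mh0(3) by (simp add: sum_distrib_right[symmetric])
    show ?thesis unfolding e1 e2 e3 ..
  qed
  have "(\<Sum>p\<in>PiI i I. \<mu>h p * (\<Sum>t\<in>{1..T}. w t * (W t p - W t (\<pi>s t i)))) \<le> (\<Sum>p\<in>PiI i I. \<mu>h p * B)"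
    by (rule sum_mono) (rule mult_left_mono[OF Fp mh0(1)])
  also have "\<dots> = B" using mh0(3) by (simp add: sum_distrib_right[symmetric])
  finally have main: "(\<Sum>p\<in>PiI i I. \<mu>h p * (\<Sum>t\<in>{1..T}. w t * (W t p - W t (\<pi>s t i)))) \<le> B" .
  have "(\<Sum>z\<in>ZI I. psig i (I, a) \<mu> \<mu>h z * u i z) - (\<Sum>z\<in>ZIa I a. q \<mu> z * u i z) =
      (\<Sum>p\<in>PiI i I. \<mu>h p * (\<Sum>t\<in>{1..T}. w t * (W t p - W t (\<pi>s t i)))) / real T"
    unfolding lhs rhs comb[symmetric] by (simp add: diff_divide_distrib)
  also have "\<dots> \<le> B / real T" using main T by (simp add: divide_right_mono)
  finally show ?thesis unfolding \<mu>_def B_def .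
qed

end


lemma max0_div: "0 \<le> (t::real) \<Longrightarrow> max 0 x / t = max 0 (x / t)"
  by (cases "t = 0") (auto simp: max_def divide_le_0_iff field_simps)

context wf_efg begin

lemma emp_Delta: assumes Jn: "\<And>t. \<pi>s t \<in> Joint" and T: "0 < T"
  shows "emp_freq \<pi>s T \<in> Delta Joint"
proof -
  have nn: "\<forall>x. 0 \<le> emp_freq \<pi>s T x" by (simp add: emp_freq_def)
  have out: "\<forall>x. x \<notin> Joint \<longrightarrow> emp_freq \<pi>s T x = 0"
  proof (intro allI impI)
    fix x assume "x \<notin> Joint"
    then have "{t\<in>{1..T}. \<pi>s t = x} = {}" using Jn by auto
    then show "emp_freq \<pi>s T x = 0" by (simp add: emp_freq_def)
  qed
  have "sum (emp_freq \<pi>s T) Joint = (\<Sum>t\<in>{1..T}. if \<pi>s t \<in> Joint then 1 else 0) / real T"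
    by (rule emp_sum[OF finite_Joint])
  also have "\<dots> = 1" using Jn T by simp
  finally show ?thesis using nn out by (simp add: Delta_def)
qed

lemma delta_bound:
  assumes icfr: "\<And>t i J. i \<in> Pl \<Longrightarrow> J \<in> Inf i \<Longrightarrow> \<pi>s t i J =
        (if \<pi>s t i \<in> PiI i J then aint J t else aext (sigma_of i J (\<pi>s t i)) J t)"
    and ar: "\<And>t i J. i \<in> Pl \<Longrightarrow> J \<in> Inf i \<Longrightarrow> aint J t \<in> Act J"
    and er: "\<And>t i J \<sigma>. i \<in> Pl \<Longrightarrow> J \<in> Inf i \<Longrightarrow> \<sigma> \<in> Sigc i J \<Longrightarrow> aext \<sigma> J t \<in> Act J"
    and Jn: "\<And>t. \<pi>s t \<in> Joint" and T: "0 < T"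
  shows "delta (emp_freq \<pi>s T) \<le>
     ereal ((\<Sum>i\<in>Pl. (real (card (Inf i)) + 1) ^ card H * SB i \<pi>s aint aext T) / real T)"
proof -
  let ?Bt = "(\<Sum>i\<in>Pl. (real (card (Inf i)) + 1) ^ card H * SB i \<pi>s aint aext T)"
  have bi: "(real (card (Inf i)) + 1) ^ card H * SB i \<pi>s aint aext T \<le> ?Bt" if i: "i \<in> Pl" for i
    by (rule member_le_sum[OF i _ finite_Pl]) (simp add: SB_nonneg)
  show ?thesis
    unfolding delta_def
  proof (rule SUP_least, rule SUP_least)
    fix i \<sigma> assume i: "i \<in> Pl" and s: "\<sigma> \<in> {(I, a). I \<in> Inf i \<and> a \<in> Act I}"
    obtain I a where e: "\<sigma> = (I, a)" and I: "I \<in> Inf i" and aI: "a \<in> Act I" using s by blast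
    have P: "\<And>t. \<pi>s t i \<in> Plans i" using Jn i by (auto simp: Joint_def PiE_def)
    let ?R = "\<Sum>z\<in>ZIa I a. q (emp_freq \<pi>s T) z * u i z"
    have "(SUP \<mu>h\<in>Delta (PiI i I). ereal (\<Sum>z\<in>ZI I. psig i (I, a) (emp_freq \<pi>s T) \<mu>h z * u i z))
        \<le> ereal (?Bt / real T + ?R)"
    proof (rule SUP_least)
      fix \<mu>h assume mh: "\<mu>h \<in> Delta (PiI i I)"
      have "(\<Sum>z\<in>ZI I. psig i (I, a) (emp_freq \<pi>s T) \<mu>h z * u i z) - ?R \<le>
          (real (card (Inf i)) + 1) ^ card H * SB i \<pi>s aint aext T / real T"
        by (rule dev_bound[where \<pi>s=\<pi>s and i=i and aint=aint and aext=aext, OF P icfr[OF i] ar[OF i] er[OF i] i Jn I aI mh T])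
      also have "\<dots> \<le> ?Bt / real T" using bi[OF i] T by (simp add: divide_right_mono)
      finally show "ereal (\<Sum>z\<in>ZI I. psig i (I, a) (emp_freq \<pi>s T) \<mu>h z * u i z) \<le> ereal (?Bt / real T + ?R)"
        by simp
    qed
    then show "(SUP \<mu>h\<in>Delta (PiI i (fst \<sigma>)). ereal (\<Sum>z\<in>ZI (fst \<sigma>). psig i \<sigma> (emp_freq \<pi>s T) \<mu>h z * u i z)) -
        ereal (\<Sum>z\<in>ZIa (fst \<sigma>) (snd \<sigma>). q (emp_freq \<pi>s T) z * u i z) \<le> ereal (?Bt / real T)"
      using e by (simp add: ereal_minus_le)
  qed
qed

lemma Btot_tendsto:
  assumes IR: "\<And>i K. i \<in> Pl \<Longrightarrow> K \<in> Inf i \<Longrightarrow>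
      ((\<lambda>T. int_regret (Act K) (\<lambda>t. aint K t) (uI i \<pi>s K) T / real T) \<longlongrightarrow> 0) sequentially"
    and ER: "\<And>i K \<sigma>. i \<in> Pl \<Longrightarrow> K \<in> Inf i \<Longrightarrow> \<sigma> \<in> Sigc i K \<Longrightarrow>
      ((\<lambda>T. ext_regret (Act K) (\<lambda>t. aext \<sigma> K t) (uE i \<pi>s \<sigma> K) T / real T) \<longlongrightarrow> 0) sequentially"
  shows "((\<lambda>T. (\<Sum>i\<in>Pl. (real (card (Inf i)) + 1) ^ card H * SB i \<pi>s aint aext T) / real T) \<longlongrightarrow> 0) sequentially"
proof -
  have eq: "(\<Sum>i\<in>Pl. (real (card (Inf i)) + 1) ^ card H * SB i \<pi>s aint aext T) / real T =
    (\<Sum>i\<in>Pl. (real (card (Inf i)) + 1) ^ card H * (\<Sum>K\<in>Inf i.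
       (real (card (Act K)) + 1) * max 0 (int_regret (Act K) (\<lambda>t. aint K t) (uI i \<pi>s K) T / real T)
     + (\<Sum>\<sigma>\<in>Sigc i K. max 0 (ext_regret (Act K) (\<lambda>t. aext \<sigma> K t) (uE i \<pi>s \<sigma> K) T / real T))))" for T
  proof -
    have g: "GB i \<pi>s aint aext K T / real T =
       (real (card (Act K)) + 1) * max 0 (int_regret (Act K) (\<lambda>t. aint K t) (uI i \<pi>s K) T / real T)
     + (\<Sum>\<sigma>\<in>Sigc i K. max 0 (ext_regret (Act K) (\<lambda>t. aext \<sigma> K t) (uE i \<pi>s \<sigma> K) T / real T))" for i K
      unfolding GB_def by (simp add: max0_div[symmetric] sum_divide_distrib add_divide_distrib)
    have "(\<Sum>i\<in>Pl. (real (card (Inf i)) + 1) ^ card H * SB i \<pi>s aint aext T) / real T =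
      (\<Sum>i\<in>Pl. (real (card (Inf i)) + 1) ^ card H * (\<Sum>K\<in>Inf i. GB i \<pi>s aint aext K T / real T))"
      by (simp add: SB_def sum_divide_distrib[symmetric])
    then show ?thesis by (simp only: g)
  qed
  show ?thesis unfolding eq
  proof (rule tendsto_null_sum)
    fix i assume i: "i \<in> Pl"
    show "((\<lambda>T. (real (card (Inf i)) + 1) ^ card H * (\<Sum>K\<in>Inf i.
       (real (card (Act K)) + 1) * max 0 (int_regret (Act K) (\<lambda>t. aint K t) (uI i \<pi>s K) T / real T)
     + (\<Sum>\<sigma>\<in>Sigc i K. max 0 (ext_regret (Act K) (\<lambda>t. aext \<sigma> K t) (uE i \<pi>s \<sigma> K) T / real T)))) \<longlongrightarrow> 0) sequentially"
    proof (rule tendsto_mult_right_zero, rule tendsto_null_sum)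
      fix K assume K: "K \<in> Inf i"
      have a: "((\<lambda>T. max 0 (int_regret (Act K) (\<lambda>t. aint K t) (uI i \<pi>s K) T / real T)) \<longlongrightarrow> max 0 0) sequentially"
        by (intro tendsto_max tendsto_const IR[OF i K])
      have b: "((\<lambda>T. max 0 (ext_regret (Act K) (\<lambda>t. aext \<sigma> K t) (uE i \<pi>s \<sigma> K) T / real T)) \<longlongrightarrow> 0) sequentially"
        if s: "\<sigma> \<in> Sigc i K" for \<sigma>
        using tendsto_max[OF tendsto_const ER[OF i K s], of 0] by simp
      show "((\<lambda>T. (real (card (Act K)) + 1) * max 0 (int_regret (Act K) (\<lambda>t. aint K t) (uI i \<pi>s K) T / real T)
     + (\<Sum>\<sigma>\<in>Sigc i K. max 0 (ext_regret (Act K) (\<lambda>t. aext \<sigma> K t) (uE i \<pi>s \<sigma> K) T / real T))) \<longlongrightarrow> 0) sequentially"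
        using tendsto_add[OF tendsto_mult_right_zero[OF a[simplified]] tendsto_null_sum[OF b]] by simp
    qed
  qed
qed

end


theorem theorem2:
  fixes Pl :: "'p set" and H :: "'a list set" and owner :: "'a list \<Rightarrow> 'p option"
    and info :: "'a list \<Rightarrow> 'i" and pc :: "'a list \<Rightarrow> 'a \<Rightarrow> real" and u :: "'p \<Rightarrow> 'a list \<Rightarrow> real"
    and M :: "'w measure"
    and \<pi> :: "nat \<Rightarrow> 'w \<Rightarrow> 'p \<Rightarrow> 'i \<Rightarrow> 'a"
    and aint :: "'i \<Rightarrow> nat \<Rightarrow> 'w \<Rightarrow> 'a"
    and aext :: "'i \<times> 'a \<Rightarrow> 'i \<Rightarrow> nat \<Rightarrow> 'w \<Rightarrow> 'a"
  assumes game: "wf_efg Pl H owner info pc"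
    and prob: "prob_space M"
    and aint_range: "\<And>i I t \<omega>. i \<in> Pl \<Longrightarrow> I \<in> efg.Inf H owner info i \<Longrightarrow>
           aint I t \<omega> \<in> efg.Act H owner info I"
    and aext_range: "\<And>i I \<sigma> t \<omega>. i \<in> Pl \<Longrightarrow> I \<in> efg.Inf H owner info i \<Longrightarrow>
           \<sigma> \<in> efg.Sigc H owner info i I \<Longrightarrow> aext \<sigma> I t \<omega> \<in> efg.Act H owner info I"
    and plans: "\<And>t \<omega>. \<pi> t \<omega> \<in> efg.Joint Pl H owner info"
    and icfr: "\<And>t \<omega> i I. i \<in> Pl \<Longrightarrow> I \<in> efg.Inf H owner info i \<Longrightarrow>
           \<pi> t \<omega> i I =
             (if \<pi> t \<omega> i \<in> efg.PiI H owner info i I then aint I t \<omega>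
              else aext (efg.sigma_of H owner info i I (\<pi> t \<omega> i)) I t \<omega>)"
    and no_int_regret: "\<And>i I. i \<in> Pl \<Longrightarrow> I \<in> efg.Inf H owner info i \<Longrightarrow>
           AE \<omega> in M. (\<lambda>T. int_regret (efg.Act H owner info I) (\<lambda>t. aint I t \<omega>)
              (\<lambda>t a. (if \<pi> t \<omega> i \<in> efg.PiI H owner info i I then 1 else 0) *
                     efg.local_u Pl H owner info pc u i (\<pi> t \<omega>) I a) T)
             \<in> o(\<lambda>T. real T)"
    and no_ext_regret: "\<And>i I \<sigma>. i \<in> Pl \<Longrightarrow> I \<in> efg.Inf H owner info i \<Longrightarrow>
           \<sigma> \<in> efg.Sigc H owner info i I \<Longrightarrow>
           AE \<omega> in M. (\<lambda>T. ext_regret (efg.Act H owner info I) (\<lambda>t. aext \<sigma> I t \<omega>)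
              (\<lambda>t a. (if \<pi> t \<omega> i \<in> efg.PiS H owner info i \<sigma> then 1 else 0) *
                     efg.local_u Pl H owner info pc u i (\<pi> t \<omega>) I a) T)
             \<in> o(\<lambda>T. real T)"
  shows "AE \<omega> in M.
           limsup (\<lambda>T. efg.delta Pl H owner info pc u (emp_freq (\<lambda>t. \<pi> t \<omega>) T)) \<le> 0 \<and>
           (\<forall>\<epsilon>>0. eventually (\<lambda>T. efg.eps_EFCE Pl H owner info pc u \<epsilon> (emp_freq (\<lambda>t. \<pi> t \<omega>) T))
                      sequentially)"
proof -
  interpret wf_efg Pl H owner info pc u by (rule game)
  define good where "good \<omega> \<longleftrightarrow> (\<forall>i\<in>Pl. \<forall>I\<in>Inf i.
      (\<lambda>T. int_regret (Act I) (\<lambda>t. aint I t \<omega>)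
          (\<lambda>t a. (if \<pi> t \<omega> i \<in> PiI i I then 1 else 0) * local_u i (\<pi> t \<omega>) I a) T) \<in> o(\<lambda>T. real T)
      \<and> (\<forall>\<sigma>\<in>Sigc i I. (\<lambda>T. ext_regret (Act I) (\<lambda>t. aext \<sigma> I t \<omega>)
          (\<lambda>t a. (if \<pi> t \<omega> i \<in> PiS i \<sigma> then 1 else 0) * local_u i (\<pi> t \<omega>) I a) T) \<in> o(\<lambda>T. real T)))" for \<omega>
  have AEg: "AE \<omega> in M. good \<omega>"
    unfolding good_def
  proof (rule AE_finite_allI[OF finite_Pl], rule AE_finite_allI[OF finite_Inf], rule eventually_conj)
    fix i I assume i: "i \<in> Pl" and I: "I \<in> Inf i"
    show "AE \<omega> in M. (\<lambda>T. int_regret (Act I) (\<lambda>t. aint I t \<omega>)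
          (\<lambda>t a. (if \<pi> t \<omega> i \<in> PiI i I then 1 else 0) * local_u i (\<pi> t \<omega>) I a) T) \<in> o(\<lambda>T. real T)"
      using no_int_regret[OF i I] .
    show "AE \<omega> in M. \<forall>\<sigma>\<in>Sigc i I. (\<lambda>T. ext_regret (Act I) (\<lambda>t. aext \<sigma> I t \<omega>)
          (\<lambda>t a. (if \<pi> t \<omega> i \<in> PiS i \<sigma> then 1 else 0) * local_u i (\<pi> t \<omega>) I a) T) \<in> o(\<lambda>T. real T)"
      by (rule AE_finite_allI[OF finite_Sigc]) (rule no_ext_regret[OF i I])
  qed
  have pw: "limsup (\<lambda>T. delta (emp_freq (\<lambda>t. \<pi> t \<omega>) T)) \<le> 0 \<and>
           (\<forall>\<epsilon>>0. eventually (\<lambda>T. eps_EFCE \<epsilon> (emp_freq (\<lambda>t. \<pi> t \<omega>) T)) sequentially)"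
    if g: "good \<omega>" for \<omega>
  proof -
    define \<pi>s where "\<pi>s = (\<lambda>t. \<pi> t \<omega>)"
    define ai where "ai = (\<lambda>J t. aint J t \<omega>)"
    define ae where "ae = (\<lambda>\<sigma> J t. aext \<sigma> J t \<omega>)"
    define b where "b T = (\<Sum>i\<in>Pl. (real (card (Inf i)) + 1) ^ card H * SB i \<pi>s ai ae T) / real T" for T
    have Jn: "\<And>t. \<pi>s t \<in> Joint" using plans by (simp add: \<pi>s_def)
    have ic: "\<And>t i J. i \<in> Pl \<Longrightarrow> J \<in> Inf i \<Longrightarrow> \<pi>s t i J =
        (if \<pi>s t i \<in> PiI i J then ai J t else ae (sigma_of i J (\<pi>s t i)) J t)"
      using icfr by (simp add: \<pi>s_def ai_def ae_def)
    have ar: "\<And>t i J. i \<in> Pl \<Longrightarrow> J \<in> Inf i \<Longrightarrow> ai J t \<in> Act J"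
      using aint_range by (simp add: ai_def)
    have er: "\<And>t i J \<sigma>. i \<in> Pl \<Longrightarrow> J \<in> Inf i \<Longrightarrow> \<sigma> \<in> Sigc i J \<Longrightarrow> ae \<sigma> J t \<in> Act J"
      using aext_range by (simp add: ae_def)
    have db: "delta (emp_freq \<pi>s T) \<le> ereal (b T)" if T: "0 < T" for T
      unfolding b_def by (rule delta_bound[where \<pi>s=\<pi>s and aint=ai and aext=ae, OF ic ar er Jn T])
    have uIeq: "uI i \<pi>s K = (\<lambda>t a. (if \<pi> t \<omega> i \<in> PiI i K then 1 else 0) * local_u i (\<pi> t \<omega>) K a)" for i K
      by (intro ext) (simp add: uI_def \<pi>s_def)
    have uEeq: "uE i \<pi>s \<sigma> K = (\<lambda>t a. (if \<pi> t \<omega> i \<in> PiS i \<sigma> then 1 else 0) * local_u i (\<pi> t \<omega>) K a)" for i K \<sigma>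
      by (intro ext) (simp add: uE_def \<pi>s_def)
    have bt: "(b \<longlongrightarrow> 0) sequentially"
      unfolding b_def[abs_def]
    proof (rule Btot_tendsto)
      fix i K assume i: "i \<in> Pl" and K: "K \<in> Inf i"
      have "(\<lambda>T. int_regret (Act K) (\<lambda>t. aint K t \<omega>)
          (\<lambda>t a. (if \<pi> t \<omega> i \<in> PiI i K then 1 else 0) * local_u i (\<pi> t \<omega>) K a) T) \<in> o(\<lambda>T. real T)"
        using g i K by (simp add: good_def)
      from smalloD_tendsto[OF this]
      show "((\<lambda>T. int_regret (Act K) (\<lambda>t. ai K t) (uI i \<pi>s K) T / real T) \<longlongrightarrow> 0) sequentially"
        by (simp add: uIeq ai_def)
    next
      fix i K \<sigma> assume i: "i \<in> Pl" and K: "K \<in> Inf i" and s: "\<sigma> \<in> Sigc i K"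
      have "(\<lambda>T. ext_regret (Act K) (\<lambda>t. aext \<sigma> K t \<omega>)
          (\<lambda>t a. (if \<pi> t \<omega> i \<in> PiS i \<sigma> then 1 else 0) * local_u i (\<pi> t \<omega>) K a) T) \<in> o(\<lambda>T. real T)"
        using g i K s by (simp add: good_def)
      from smalloD_tendsto[OF this]
      show "((\<lambda>T. ext_regret (Act K) (\<lambda>t. ae \<sigma> K t) (uE i \<pi>s \<sigma> K) T / real T) \<longlongrightarrow> 0) sequentially"
        by (simp add: uEeq ae_def)
    qed
    have ev0: "eventually (\<lambda>T. 0 < T) sequentially" by (rule eventually_gt_at_top)
    have "limsup (\<lambda>T. delta (emp_freq \<pi>s T)) \<le> limsup (\<lambda>T. ereal (b T))"
      by (rule Limsup_mono) (rule eventually_mono[OF ev0 db])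
    also have "limsup (\<lambda>T. ereal (b T)) = 0"
    proof -
      have "((\<lambda>T. ereal (b T)) \<longlongrightarrow> ereal 0) sequentially" using bt by simp
      then have "limsup (\<lambda>T. ereal (b T)) = ereal 0" by (rule lim_imp_Limsup[rotated]) simp
      then show ?thesis by (simp add: zero_ereal_def)
    qed
    finally have l: "limsup (\<lambda>T. delta (emp_freq \<pi>s T)) \<le> 0" .
    have e: "eventually (\<lambda>T. eps_EFCE \<epsilon> (emp_freq \<pi>s T)) sequentially" if \<epsilon>: "0 < \<epsilon>" for \<epsilon>
    proof -
      have "eventually (\<lambda>T. b T < \<epsilon>) sequentially" using order_tendstoD(2)[OF bt \<epsilon>] .
      then show ?thesis using ev0
      proof (rule eventually_elim2)
        fix T assume bT: "b T < \<epsilon>" and T: "0 < (T::nat)"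
        have "delta (emp_freq \<pi>s T) \<le> ereal \<epsilon>" using db[OF T] bT by (meson ereal_less_eq(3) less_imp_le order_trans)
        then show "eps_EFCE \<epsilon> (emp_freq \<pi>s T)" using emp_Delta[OF Jn T] by (simp add: eps_EFCE_def)
      qed
    qed
    show ?thesis using l e by (simp add: \<pi>s_def)
  qed
  show ?thesis using AEg by (rule eventually_mono) (rule pw)
qed


end
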